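(* Let $G=(V,E)$ be a graph of bounded degree and consider the rescaled SEIS process $\eta_t$ on $G$ with parameters $\lambda>0,\tau>0$, constructed from its graphical representation. Let $R\subset\mathcal{S}$ be the closure of an open set. If $R$ is onset-ordered and $\eta$ is good for $R$, then almost surely: (1) for each $t\ge0$, $\eta_t(x)=2$ for at most one $x$ in the set $\{x\in V:(x,t)\in R\}$; and (2) every potentially active path $\gamma$ contained in $R$ whose base $(y,s)$ satisfies $\eta_s(y)=1$ is active.
   Context: The SEIS process: sites in states $0$ (susceptible), $1$ (exposed), $2$ (infectious). Rescaled graphical representation: on $\mathcal{S}=V\times[0,\infty)$ (topology generated by sets $\{a\}\times(t,t')$, $a\in V\cup E$), independent Poisson processes of recovery labels $\times$ (intensity $\tau$) and onset labels $\star$ (intensity $1$) at each site, and transmission labels $\leftrightarrow$ (intensity $\lambda\tau$) along each edge. The process evolves by: at a $\times$ at $x$, if $x$ is in state $2$ it becomes $0$; at a $\star$ at $x$, if $x$ is in state $1$ it becomes $2$; at a $\leftrightarrow$ on $xy$, if one endpoint is in state $2$ and the other in state $0$, the latter becomes $1$; otherwise nothing happens. A path is a list $(v_1,h_1,\dots,v_{m-1},h_{m-1},v_m)$ with $v_i=\{x_i\}\times(t_{i-1},t_i)$, $t_{i-1}<t_i$, and $h_i=\{x_ix_{i+1}\}\times\{t_i\}$ with $x_ix_{i+1}\in E$; its base is $(x_1,t_0)$ and its end is $(x_m,t_m)$. A path is active if for $i=1,\dots,m-1$, $\eta_{t_i}(x_i)=2$, $\eta_{t_i}(x_{i+1})=1$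 and there is a $\leftrightarrow$ label at $h_i$, and for $i=1,\dots,m$, $\eta_t(x_i)\ne0$ for $t\in(t_{i-1},t_i)$. A path is potentially active if (a) for $i=1,\dots,m-1$ there is a $\leftrightarrow$ label at $h_i$; (b) for $i=1,\dots,m-1$ there is a $\star$ label at some $(x_i,t)\in v_i$ such that there are no $\star$ labels in $\{x_i\}\times(t_{i-1},t)$ and no $\times$ labels in $\{x_i\}\times(t,t_i)$; (c) for any $\star$ label at $(x_m,t)\in v_m$ there are no $\times$ labels in $\{x_m\}\times(t,t_m)$. The base of $R$ is $\mathrm{base}(R)=\{(x,t)\in R:(x,t-\epsilon)\notin R\text{ for all small enough }\epsilon>0\}$. $R$ is onset-ordered if whenever there is a $\star$ label at $(x,t)\in R$ and $\{x\}\times(t,t')\subset R$ with $t<t'$, then for any $\star$ label at a point $(y,s)\in R$ with $s\in(t,t')$ there is a $\times$ label at $(x,s')$ for some $s'\in(t,s)$. $\eta$ is good for $R$ if $\eta_t(x)\ne2$ for all $(x,t)\in\mathrm{base}(R)$. *)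

theory Defs
  imports "HOL-Probability.Probability"
begin

definition graph :: "'v set \<Rightarrow> 'v set set \<Rightarrow> bool" where
  "graph V E \<longleftrightarrow> (\<forall>e\<in>E. \<exists>x y. x \<noteq> y \<and> x \<in> V \<and> y \<in> V \<and> e = {x, y})"

definition bounded_degree :: "'v set \<Rightarrow> 'v set set \<Rightarrow> bool" where
  "bounded_degree V E \<longleftrightarrow>
     (\<exists>D::nat. \<forall>x\<in>V. finite {y. {x, y} \<in> E} \<and> card {y. {x, y} \<in> E} \<le> D)"

datatype 'v loc = Vtx 'v | Edg "'v set"

definition locs :: "'v set \<Rightarrow> 'v set set \<Rightarrow> 'v loc set" where
  "locs V E = Vtx ` V \<union> Edg ` E"

definition spacetime_top :: "'v set \<Rightarrow> 'v set set \<Rightarrow> ('v loc \<times> real) topology" where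
  "spacetime_top V E =
     topology_generated_by {{a} \<times> ({t<..<t'} \<inter> {0..}) | a t t'. a \<in> locs V E \<and> t < t'}"

definition closure_of_open :: "'v set \<Rightarrow> 'v set set \<Rightarrow> ('v loc \<times> real) set \<Rightarrow> bool" where
  "closure_of_open V E R \<longleftrightarrow>
     (\<exists>U. openin (spacetime_top V E) U \<and> R = spacetime_top V E closure_of U)"

definition base_of :: "('v loc \<times> real) set \<Rightarrow> ('v loc \<times> real) set" where
  "base_of R = {(a, t) \<in> R. \<exists>\<delta>>0. \<forall>\<epsilon>. 0 < \<epsilon> \<and> \<epsilon> < \<delta> \<longrightarrow> (a, t - \<epsilon>) \<notin> R}"

text \<open>Label times of a Poisson process given by its interarrival times.\<close>
definition arrivals :: "(nat \<Rightarrow> real) \<Rightarrow> real set" where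
  "arrivals T = range (\<lambda>n. \<Sum>k\<le>n. T k)"

datatype 'v clock = RecC 'v nat | OnsC 'v nat | TraC "'v set" nat

definition clock_index :: "'v set \<Rightarrow> 'v set set \<Rightarrow> 'v clock set" where
  "clock_index V E = {RecC x n | x n. x \<in> V} \<union> {OnsC x n | x n. x \<in> V} \<union> {TraC e n | e n. e \<in> E}"

definition rec_lab :: "('v clock \<Rightarrow> 'w \<Rightarrow> real) \<Rightarrow> 'w \<Rightarrow> 'v \<Rightarrow> real set" where
  "rec_lab X \<omega> x = arrivals (\<lambda>k. X (RecC x k) \<omega>)"
definition ons_lab :: "('v clock \<Rightarrow> 'w \<Rightarrow> real) \<Rightarrow> 'w \<Rightarrow> 'v \<Rightarrow> real set" where
  "ons_lab X \<omega> x = arrivals (\<lambda>k. X (OnsC x k) \<omega>)"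
definition tra_lab :: "('v clock \<Rightarrow> 'w \<Rightarrow> real) \<Rightarrow> 'w \<Rightarrow> 'v set \<Rightarrow> real set" where
  "tra_lab X \<omega> e = arrivals (\<lambda>k. X (TraC e k) \<omega>)"

definition graphical_rep ::
  "'w measure \<Rightarrow> 'v set \<Rightarrow> 'v set set \<Rightarrow> real \<Rightarrow> real \<Rightarrow> ('v clock \<Rightarrow> 'w \<Rightarrow> real) \<Rightarrow> bool" where
  "graphical_rep M V E lam tau X \<longleftrightarrow>
     prob_space.indep_vars M (\<lambda>_. borel) X (clock_index V E) \<and>
     (\<forall>x\<in>V. \<forall>n. distributed M lborel (X (RecC x n)) (exponential_density tau)) \<and>
     (\<forall>x\<in>V. \<forall>n. distributed M lborel (X (OnsC x n)) (exponential_density 1)) \<and>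
     (\<forall>e\<in>E. \<forall>n. distributed M lborel (X (TraC e n)) (exponential_density (lam * tau)))"

text \<open>New state of x at a time t, given the states just before t (pre), and whether
  t is a recovery / onset label at x and the set of transmission-label times at edges.\<close>
definition seis_update ::
  "'v set set \<Rightarrow> ('v \<Rightarrow> real set) \<Rightarrow> ('v \<Rightarrow> real set) \<Rightarrow> ('v set \<Rightarrow> real set)
    \<Rightarrow> ('v \<Rightarrow> nat) \<Rightarrow> 'v \<Rightarrow> real \<Rightarrow> nat" where
  "seis_update E rc on tr pre x t =
     (if t \<in> rc x \<and> pre x = 2 then 0
      else if t \<in> on x \<and> pre x = 1 then 2
      else if pre x = 0 \<and> (\<exists>y. {x, y} \<in> E \<and> t \<in> tr {x, y} \<and> pre y = 2) then 1
      else pre x)"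

definition seis_traj ::
  "'v set \<Rightarrow> 'v set set \<Rightarrow> ('v \<Rightarrow> real set) \<Rightarrow> ('v \<Rightarrow> real set) \<Rightarrow> ('v set \<Rightarrow> real set)
    \<Rightarrow> ('v \<Rightarrow> real \<Rightarrow> nat) \<Rightarrow> bool" where
  "seis_traj V E rc on tr eta \<longleftrightarrow>
     (\<forall>x\<in>V. \<forall>t\<ge>0. eta x t \<in> {0, 1, 2} \<and> (\<exists>\<epsilon>>0. \<forall>s\<in>{t..<t+\<epsilon>}. eta x s = eta x t)) \<and>
     (\<forall>x\<in>V. \<forall>t>0. \<exists>\<epsilon>>0. \<epsilon> \<le> t \<and>
        (\<forall>y\<in>V. (y = x \<or> {x, y} \<in> E) \<longrightarrow> (\<forall>s\<in>{t-\<epsilon><..<t}. eta y s = eta y (t - \<epsilon>/2))) \<and>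
        eta x t = seis_update E rc on tr (\<lambda>y. eta y (t - \<epsilon>/2)) x t)"

definition onset_ordered ::
  "('v \<Rightarrow> real set) \<Rightarrow> ('v \<Rightarrow> real set) \<Rightarrow> ('v loc \<times> real) set \<Rightarrow> bool" where
  "onset_ordered rc on R \<longleftrightarrow>
     (\<forall>x t t'. t \<in> on x \<and> (Vtx x, t) \<in> R \<and> t < t' \<and> {Vtx x} \<times> {t<..<t'} \<subseteq> R \<longrightarrow>
        (\<forall>y s. s \<in> on y \<and> (Vtx y, s) \<in> R \<and> t < s \<and> s < t' \<longrightarrow>
           (\<exists>s'. t < s' \<and> s' < s \<and> s' \<in> rc x)))"

definition good_for :: "('v \<Rightarrow> real \<Rightarrow> nat) \<Rightarrow> ('v loc \<times> real) set \<Rightarrow> bool" where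
  "good_for eta R \<longleftrightarrow> (\<forall>x t. (Vtx x, t) \<in> base_of R \<longrightarrow> eta x t \<noteq> 2)"

text \<open>A path (v_1,h_1,...,v_m) with v_i = {x_i} x (t_(i-1),t_i), h_i = {x_i x_(i+1)} x {t_i}
  is encoded (0-based) by the vertex list xs = [x_1..x_m] and the time list ts = [t_0..t_m].\<close>
definition is_path :: "'v set set \<Rightarrow> 'v list \<Rightarrow> real list \<Rightarrow> bool" where
  "is_path E xs ts \<longleftrightarrow> xs \<noteq> [] \<and> length ts = length xs + 1 \<and> 0 \<le> ts ! 0 \<and>
     (\<forall>i < length xs. ts ! i < ts ! (i+1)) \<and>
     (\<forall>i. i + 1 < length xs \<longrightarrow> {xs ! i, xs ! (i+1)} \<in> E)"

definition path_set :: "'v list \<Rightarrow> real list \<Rightarrow> ('v loc \<times> real) set" where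
  "path_set xs ts =
     (\<Union>i<length xs. {Vtx (xs ! i)} \<times> {ts ! i <..< ts ! (i+1)}) \<union>
     (\<Union>i\<in>{i. i + 1 < length xs}. {Edg {xs ! i, xs ! (i+1)}} \<times> {ts ! (i+1)})"

definition active_path ::
  "('v set \<Rightarrow> real set) \<Rightarrow> ('v \<Rightarrow> real \<Rightarrow> nat) \<Rightarrow> 'v list \<Rightarrow> real list \<Rightarrow> bool" where
  "active_path tr eta xs ts \<longleftrightarrow>
     (\<forall>i. i + 1 < length xs \<longrightarrow>
        eta (xs ! i) (ts ! (i+1)) = 2 \<and> eta (xs ! (i+1)) (ts ! (i+1)) = 1 \<and>
        ts ! (i+1) \<in> tr {xs ! i, xs ! (i+1)}) \<and>
     (\<forall>i < length xs. \<forall>t. ts ! i < t \<and> t < ts ! (i+1) \<longrightarrow> eta (xs ! i) t \<noteq> 0)"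

definition potentially_active ::
  "('v \<Rightarrow> real set) \<Rightarrow> ('v \<Rightarrow> real set) \<Rightarrow> ('v set \<Rightarrow> real set) \<Rightarrow> 'v list \<Rightarrow> real list \<Rightarrow> bool" where
  "potentially_active rc on tr xs ts \<longleftrightarrow>
     (\<forall>i. i + 1 < length xs \<longrightarrow> ts ! (i+1) \<in> tr {xs ! i, xs ! (i+1)}) \<and>
     (\<forall>i. i + 1 < length xs \<longrightarrow>
        (\<exists>t. ts ! i < t \<and> t < ts ! (i+1) \<and> t \<in> on (xs ! i) \<and>
           (\<forall>s. ts ! i < s \<and> s < t \<longrightarrow> s \<notin> on (xs ! i)) \<and>
           (\<forall>s. t < s \<and> s < ts ! (i+1) \<longrightarrow> s \<notin> rc (xs ! i)))) \<and>
     (let m = length xs in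
        \<forall>t. ts ! (m-1) < t \<and> t < ts ! m \<and> t \<in> on (xs ! (m-1)) \<longrightarrow>
          (\<forall>s. t < s \<and> s < ts ! m \<longrightarrow> s \<notin> rc (xs ! (m-1))))"

end

theory Submission
  imports Defs
begin


lemma gen_open_nbhd:
  assumes "generate_topology_on {{a} \<times> ({t<..<t'} \<inter> {0..}) | a t t'. a \<in> L \<and> t < t'} Op"
  shows "\<forall>a (r::real). (a, r) \<in> Op \<longrightarrow> (\<exists>\<delta>>0. \<forall>r'. \<bar>r' - r\<bar> < \<delta> \<and> 0 \<le> r' \<longrightarrow> (a, r') \<in> Op)"
  using assms
proof (induction rule: generate_topology_on.induct)
  case Empty
  then show ?case by simp
next
  case (Int A B)
  show ?case
  proof (intro allI impI)
    fix a r assume "(a, r) \<in> A \<inter> B"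
    then obtain d1 d2 where "d1>0" "d2>0" "\<forall>r'. \<bar>r' - r\<bar> < d1 \<and> 0 \<le> r' \<longrightarrow> (a, r') \<in> A"
      "\<forall>r'. \<bar>r' - r\<bar> < d2 \<and> 0 \<le> r' \<longrightarrow> (a, r') \<in> B" using Int.IH by blast
    then show "\<exists>\<delta>>0. \<forall>r'. \<bar>r' - r\<bar> < \<delta> \<and> 0 \<le> r' \<longrightarrow> (a, r') \<in> A \<inter> B"
      by (intro exI[of _ "min d1 d2"]) auto
  qed
next
  case (UN K)
  show ?case
  proof (intro allI impI)
    fix a r assume "(a, r) \<in> \<Union>K"
    then obtain k where "k \<in> K" "(a,r) \<in> k" by blast
    then obtain d where "d>0" "\<forall>r'. \<bar>r' - r\<bar> < d \<and> 0 \<le> r' \<longrightarrow> (a, r') \<in> k" using UN.IH by blast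
    then show "\<exists>\<delta>>0. \<forall>r'. \<bar>r' - r\<bar> < \<delta> \<and> 0 \<le> r' \<longrightarrow> (a, r') \<in> \<Union>K"
      using \<open>k \<in> K\<close> by blast
  qed
next
  case (Basis s)
  then obtain b t t' where s: "s = {b} \<times> ({t<..<t'} \<inter> {0..})" by blast
  show ?case
  proof (intro allI impI)
    fix a r assume "(a, r) \<in> s"
    then have "a = b" "t < r" "r < t'" using s by auto
    then show "\<exists>\<delta>>0. \<forall>r'. \<bar>r' - r\<bar> < \<delta> \<and> 0 \<le> r' \<longrightarrow> (a, r') \<in> s"
      using s by (intro exI[of _ "min (r - t) (t' - r)"]) auto
  qed
qed

lemma topspace_st: "topspace (spacetime_top V E) = locs V E \<times> {0..}"
proof -
  have "\<Union>{{a} \<times> ({t<..<t'} \<inter> {0..}) | a (t::real) t'. a \<in> locs V E \<and> t < t'} = locs V E \<times> {0..}"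
  proof
    show "locs V E \<times> {0..} \<subseteq> \<Union>{{a} \<times> ({t<..<t'} \<inter> {0..}) | a (t::real) t'. a \<in> locs V E \<and> t < t'}"
    proof
      fix p assume "p \<in> locs V E \<times> {0::real..}"
      then obtain a r where p: "p = (a,r)" "a \<in> locs V E" "r \<ge> 0" by auto
      then have "p \<in> {a} \<times> ({r-1<..<r+1} \<inter> {0..})" by auto
      then show "p \<in> \<Union>{{a} \<times> ({t<..<t'} \<inter> {0..}) | a (t::real) t'. a \<in> locs V E \<and> t < t'}"
        using p by (intro UnionI[of "{a} \<times> ({r-1<..<r+1} \<inter> {0..})"] CollectI exI[of _ a] exI[of _ "r-1"] exI[of _ "r+1"]) auto
    qed
  next
    show "\<Union>{{a} \<times> ({t<..<t'} \<inter> {0..}) | a (t::real) t'. a \<in> locs V E \<and> t < t'} \<subseteq> locs V E \<times> {0..}"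
    proof
      fix p assume "p \<in> \<Union>{{a} \<times> ({t<..<t'} \<inter> {0..}) | a (t::real) t'. a \<in> locs V E \<and> t < t'}"
      then obtain a t t' where "p \<in> {a} \<times> ({t<..<t'} \<inter> {0..})" "a \<in> locs V E" by blast
      then show "p \<in> locs V E \<times> {0..}" by auto
    qed
  qed
  then show ?thesis unfolding spacetime_top_def by simp
qed

lemma open_st_nbhd:
  assumes "openin (spacetime_top V E) Op" "(a, r) \<in> Op"
  shows "\<exists>\<delta>>0. \<forall>r'. \<bar>r' - r\<bar> < \<delta> \<and> 0 \<le> r' \<longrightarrow> (a, r') \<in> Op"
  using gen_open_nbhd[OF openin_topology_generated_by[OF assms(1)[unfolded spacetime_top_def]]] assms(2)
  by blast

lemma R_sub:
  assumes "closure_of_open V E R" "(a, t) \<in> R"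
  shows "a \<in> locs V E" "0 \<le> t"
proof -
  obtain U where "R = spacetime_top V E closure_of U" using assms unfolding closure_of_open_def by blast
  then have "R \<subseteq> topspace (spacetime_top V E)" by (simp add: closure_of_subset_topspace)
  then have "(a,t) \<in> locs V E \<times> {0..}" using assms(2) topspace_st by blast
  then show "a \<in> locs V E" "0 \<le> t" by auto
qed

lemma R_closed:
  assumes "closure_of_open V E R" "0 \<le> t" "(Vtx x, t) \<notin> R"
  shows "\<exists>\<delta>>0. \<forall>r. \<bar>r - t\<bar> < \<delta> \<longrightarrow> (Vtx x, r) \<notin> R"
proof (cases "Vtx x \<in> locs V E")
  case False
  then show ?thesis using R_sub[OF assms(1)] by (intro exI[of _ 1]) auto
next
  case True
  obtain U where RU: "R = spacetime_top V E closure_of U" using assms unfolding closure_of_open_def by blast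
  then have "closedin (spacetime_top V E) R" by simp
  then have op: "openin (spacetime_top V E) (topspace (spacetime_top V E) - R)"
    by (simp add: closedin_def)
  have "(Vtx x, t) \<in> topspace (spacetime_top V E) - R" using True assms topspace_st by auto
  from open_st_nbhd[OF op this] obtain d where d: "d>0" "\<forall>r'. \<bar>r' - t\<bar> < d \<and> 0 \<le> r' \<longrightarrow> (Vtx x, r') \<in> topspace (spacetime_top V E) - R" by blast
  show ?thesis
  proof (intro exI[of _ d] conjI allI impI)
    fix r assume "\<bar>r - t\<bar> < d"
    then show "(Vtx x, r) \<notin> R" using d R_sub[OF assms(1), of "Vtx x" r] by (cases "0 \<le> r") auto
  qed (use d in auto)
qed

lemma R_interior:
  assumes "closure_of_open V E R" "(Vtx x, t) \<in> R"
  shows "\<exists>p q. p \<in> \<rat> \<and> q \<in> \<rat> \<and> 0 \<le> p \<and> p < q \<and> (\<forall>r. p < r \<and> r < q \<longrightarrow> (Vtx x, r) \<in> R)"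
proof -
  obtain U where op: "openin (spacetime_top V E) U" and RU: "R = spacetime_top V E closure_of U"
    using assms unfolding closure_of_open_def by blast
  have nb: "openin (spacetime_top V E) ({Vtx x} \<times> ({t-1<..<t+1} \<inter> {0..}))"
    unfolding spacetime_top_def
    apply (rule topology_generated_by_Basis)
    using R_sub[OF assms] by (intro CollectI exI[of _ "Vtx x"] exI[of _ "t-1"] exI[of _ "t+1"]) auto
  have tin: "(Vtx x, t) \<in> {Vtx x} \<times> ({t-1<..<t+1} \<inter> {0..})" using R_sub[OF assms] by auto
  have "(Vtx x, t) \<in> spacetime_top V E closure_of U" using assms(2) RU by simp
  then have "\<exists>y. y \<in> U \<and> y \<in> {Vtx x} \<times> ({t-1<..<t+1} \<inter> {0..})"
  proof -
    have "\<forall>T. (Vtx x, t) \<in> T \<and> openin (spacetime_top V E) T \<longrightarrow> (\<exists>y. y \<in> U \<and> y \<in> T)"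
      using \<open>(Vtx x, t) \<in> spacetime_top V E closure_of U\<close> unfolding in_closure_of by (elim conjE)
    then show ?thesis using nb tin by (elim allE[of _ "{Vtx x} \<times> ({t-1<..<t+1} \<inter> {0..})"]) simp
  qed
  then obtain y where "y \<in> U" "y \<in> {Vtx x} \<times> ({t-1<..<t+1} \<inter> {0..})" by blast
  then obtain r0 where r0: "(Vtx x, r0) \<in> U" "0 \<le> r0" by auto
  from open_st_nbhd[OF op r0(1)] obtain d where d: "d>0" "\<forall>r'. \<bar>r' - r0\<bar> < d \<and> 0 \<le> r' \<longrightarrow> (Vtx x, r') \<in> U" by blast
  have "U \<subseteq> topspace (spacetime_top V E)" using openin_subset[OF op] .
  then have UR: "U \<subseteq> R" unfolding RU by (rule closure_of_subset)
  obtain p where p: "p \<in> \<rat>" "r0 < p" "p < r0 + d/2" using Rats_dense_in_real[of r0 "r0+d/2"] d(1)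
    by auto
  obtain q where q: "q \<in> \<rat>" "p < q" "q < r0 + d/2" using Rats_dense_in_real[of p "r0+d/2"] p
    by auto
  have "\<forall>r. p < r \<and> r < q \<longrightarrow> (Vtx x, r) \<in> R"
  proof (intro allI impI)
    fix r assume "p < r \<and> r < q"
    then have "\<bar>r - r0\<bar> < d \<and> 0 \<le> r" using p q r0 d by auto
    then show "(Vtx x, r) \<in> R" using d(2) UR by blast
  qed
  then show ?thesis
    using p q r0 by (intro exI[of _ p] exI[of _ q]) auto
qed




lemma traj_pre:
  assumes "seis_traj V E rc on tr \<eta>" "x \<in> V" "t > 0"
  obtains \<epsilon> where "\<epsilon> > 0" "\<epsilon> \<le> t"
    "\<And>y s. y \<in> V \<Longrightarrow> y = x \<or> {x, y} \<in> E \<Longrightarrow> t - \<epsilon> < s \<Longrightarrow> s < t \<Longrightarrow> \<eta> y s = \<eta> y (t - \<epsilon>/2)"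
    "\<eta> x t = seis_update E rc on tr (\<lambda>y. \<eta> y (t - \<epsilon>/2)) x t"
  using assms unfolding seis_traj_def by (metis greaterThanLessThan_iff)

lemma traj_right:
  assumes "seis_traj V E rc on tr \<eta>" "x \<in> V" "t \<ge> 0"
  obtains \<epsilon> where "\<epsilon> > 0" "\<And>s. t \<le> s \<Longrightarrow> s < t + \<epsilon> \<Longrightarrow> \<eta> x s = \<eta> x t"
  using assms unfolding seis_traj_def by (metis atLeastLessThan_iff)

lemma traj_range:
  assumes "seis_traj V E rc on tr \<eta>" "x \<in> V" "t \<ge> 0"
  shows "\<eta> x t \<in> {0,1,2}"
  using assms unfolding seis_traj_def by blast

lemma inv:
  assumes traj: "seis_traj V E rc on tr \<eta>" and x: "x \<in> V" and a: "0 \<le> a" "a \<le> b"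
    and P0: "P a (\<eta> x a)"
    and right: "\<And>u c. a \<le> u \<Longrightarrow> u < b \<Longrightarrow> P u c \<Longrightarrow> \<exists>\<delta>>0. \<forall>w. u < w \<and> w < u + \<delta> \<longrightarrow> P w c"
    and step: "\<And>u. a < u \<Longrightarrow> u \<le> b \<Longrightarrow> \<exists>\<delta>>0. \<forall>v pre. a \<le> v \<and> v < u \<and> u - \<delta> < v \<and> P v (pre x)
                 \<longrightarrow> P u (seis_update E rc on tr pre x u)"
  shows "\<forall>u. a \<le> u \<and> u \<le> b \<longrightarrow> P u (\<eta> x u)"
proof -
  define S where "S = {s. a \<le> s \<and> s \<le> b \<and> (\<forall>u. a \<le> u \<and> u \<le> s \<longrightarrow> P u (\<eta> x u))}"
  have aS: "a \<in> S" using a P0 unfolding S_def by auto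
  have bdd: "bdd_above S" unfolding S_def by (rule bdd_aboveI[of _ b]) auto
  define s0 where "s0 = Sup S"
  have s0a: "a \<le> s0" unfolding s0_def using aS bdd by (rule cSup_upper)
  have s0b: "s0 \<le> b" unfolding s0_def using aS by (intro cSup_least) (auto simp: S_def)
  have C1: "P u (\<eta> x u)" if "a \<le> u" "u < s0" for u
  proof -
    obtain s where "s \<in> S" "u < s" using less_cSup_iff[of S u] aS bdd \<open>u < s0\<close> unfolding s0_def by auto
    then show ?thesis using that unfolding S_def by auto
  qed
  have C2: "P s0 (\<eta> x s0)"
  proof (cases "s0 = a")
    case True then show ?thesis using P0 by simp
  next
    case False
    then have s0pos: "s0 > 0" "a < s0" using s0a a by auto
    obtain \<epsilon> where e: "\<epsilon> > 0" "\<epsilon> \<le> s0"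
      "\<And>y s. y \<in> V \<Longrightarrow> y = x \<or> {x, y} \<in> E \<Longrightarrow> s0 - \<epsilon> < s \<Longrightarrow> s < s0 \<Longrightarrow> \<eta> y s = \<eta> y (s0 - \<epsilon>/2)"
      "\<eta> x s0 = seis_update E rc on tr (\<lambda>y. \<eta> y (s0 - \<epsilon>/2)) x s0"
      using traj_pre[OF traj x s0pos(1)] by blast
    obtain \<delta> where d: "\<delta> > 0" "\<forall>v pre. a \<le> v \<and> v < s0 \<and> s0 - \<delta> < v \<and> P v (pre x)
                 \<longrightarrow> P s0 (seis_update E rc on tr pre x s0)"
      using step[OF s0pos(2) s0b] by blast
    define v where "v = (max (max a (s0 - \<epsilon>)) (s0 - \<delta>) + s0) / 2"
    have v: "a \<le> v" "v < s0" "s0 - \<delta> < v" "s0 - \<epsilon> < v"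
      using s0pos e d unfolding v_def by auto
    have "P v (\<eta> x v)" using C1 v by auto
    moreover have "\<eta> x v = \<eta> x (s0 - \<epsilon>/2)" using e(3)[OF x _ v(4) v(2)] by simp
    ultimately have "P v ((\<lambda>y. \<eta> y (s0 - \<epsilon>/2)) x)" by simp
    then have "P s0 (seis_update E rc on tr (\<lambda>y. \<eta> y (s0 - \<epsilon>/2)) x s0)"
      using d(2)[rule_format, of v "\<lambda>y. \<eta> y (s0 - \<epsilon>/2)"] v by blast
    then show ?thesis using e(4) by simp
  qed
  have C3: "s0 = b"
  proof (rule ccontr)
    assume "s0 \<noteq> b"
    then have lt: "s0 < b" using s0b by auto
    obtain \<epsilon> where e: "\<epsilon> > 0" "\<And>s. s0 \<le> s \<Longrightarrow> s < s0 + \<epsilon> \<Longrightarrow> \<eta> x s = \<eta> x s0"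
      using traj_right[OF traj x, of s0] s0a a by auto
    obtain \<delta> where d: "\<delta> > 0" "\<forall>w. s0 < w \<and> w < s0 + \<delta> \<longrightarrow> P w (\<eta> x s0)"
      using right[OF s0a lt C2] by blast
    define w where "w = min (s0 + min \<epsilon> \<delta> / 2) b"
    have w: "s0 < w" "w \<le> b" "w < s0 + \<epsilon>" "w < s0 + \<delta>" using e(1) d(1) lt unfolding w_def by auto
    have "w \<in> S" unfolding S_def
    proof (intro CollectI conjI allI impI)
      fix u assume u: "a \<le> u \<and> u \<le> w"
      show "P u (\<eta> x u)"
      proof (cases "u < s0")
        case True then show ?thesis using C1 u by auto
      next
        case False
        show ?thesis
        proof (cases "u = s0")
          case True then show ?thesis using C2 by simp
        next
          case False
          then have "s0 < u" using \<open>\<not> u < s0\<close> by auto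
          have "u < s0 + \<epsilon>" "u < s0 + \<delta>" using u w by auto
          then have "\<eta> x u = \<eta> x s0" using e(2)[of u] \<open>s0 < u\<close> by simp
          moreover have "P u (\<eta> x s0)" using d(2) \<open>s0 < u\<close> \<open>u < s0 + \<delta>\<close> by blast
          ultimately show ?thesis by simp
        qed
      qed
    qed (use w s0a in auto)
    then have "w \<le> s0" unfolding s0_def using bdd by (rule cSup_upper)
    then show False using w by auto
  qed
  show ?thesis
  proof (intro allI impI)
    fix u assume "a \<le> u \<and> u \<le> b"
    then show "P u (\<eta> x u)" using C1[of u] C2 C3 by (cases "u = b") auto
  qed
qed

lemma update_2:
  assumes "seis_update E rc on tr pre x t = 2" "pre x \<noteq> 2"
  shows "t \<in> on x \<and> pre x = 1"
  using assms unfolding seis_update_def by (auto split: if_splits)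

lemma entry:
  assumes traj: "seis_traj V E rc on tr \<eta>" and x: "x \<in> V" and s: "0 \<le> s" "\<eta> x s = 2"
  shows "\<exists>t0. 0 \<le> t0 \<and> t0 \<le> s \<and> (\<forall>u. t0 \<le> u \<and> u \<le> s \<longrightarrow> \<eta> x u = 2) \<and> (t0 = 0 \<or> (0 < t0 \<and> t0 \<in> on x))"
proof -
  define T where "T = {t. 0 \<le> t \<and> t \<le> s \<and> (\<forall>u. t \<le> u \<and> u \<le> s \<longrightarrow> \<eta> x u = 2)}"
  have sT: "s \<in> T" using s unfolding T_def by auto
  have bdd: "bdd_below T" unfolding T_def by (rule bdd_belowI[of _ 0]) auto
  define t0 where "t0 = Inf T"
  have t0s: "t0 \<le> s" unfolding t0_def using sT bdd by (rule cInf_lower)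
  have t00: "0 \<le> t0" unfolding t0_def using sT by (intro cInf_greatest) (auto simp: T_def)
  have C1: "\<eta> x u = 2" if "t0 < u" "u \<le> s" for u
  proof -
    obtain t where "t \<in> T" "t < u" using cInf_less_iff[of T u] sT bdd \<open>t0 < u\<close> unfolding t0_def by auto
    then show ?thesis using that unfolding T_def by auto
  qed
  have C2: "\<eta> x t0 = 2"
  proof (cases "t0 = s")
    case True then show ?thesis using s by simp
  next
    case False
    then have lt: "t0 < s" using t0s by auto
    obtain \<epsilon> where e: "\<epsilon> > 0" "\<And>r. t0 \<le> r \<Longrightarrow> r < t0 + \<epsilon> \<Longrightarrow> \<eta> x r = \<eta> x t0"
      using traj_right[OF traj x t00] by blast
    define w where "w = min (t0 + \<epsilon>/2) s"
    have "t0 < w" "w \<le> s" "w < t0 + \<epsilon>" using e(1) lt unfolding w_def by auto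
    then show ?thesis using C1 e(2)[of w] by auto
  qed
  have allT: "\<forall>u. t0 \<le> u \<and> u \<le> s \<longrightarrow> \<eta> x u = 2"
  proof (intro allI impI)
    fix u assume "t0 \<le> u \<and> u \<le> s"
    then show "\<eta> x u = 2" using C1[of u] C2 by (cases "u = t0") auto
  qed
  have "t0 = 0 \<or> (0 < t0 \<and> t0 \<in> on x)"
  proof (cases "t0 = 0")
    case False
    then have pos: "t0 > 0" using t00 by auto
    obtain \<epsilon> where e: "\<epsilon> > 0" "\<epsilon> \<le> t0"
      "\<And>y r. y \<in> V \<Longrightarrow> y = x \<or> {x, y} \<in> E \<Longrightarrow> t0 - \<epsilon> < r \<Longrightarrow> r < t0 \<Longrightarrow> \<eta> y r = \<eta> y (t0 - \<epsilon>/2)"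
      "\<eta> x t0 = seis_update E rc on tr (\<lambda>y. \<eta> y (t0 - \<epsilon>/2)) x t0"
      using traj_pre[OF traj x pos] by blast
    have "\<eta> x (t0 - \<epsilon>/2) \<noteq> 2"
    proof
      assume h: "\<eta> x (t0 - \<epsilon>/2) = 2"
      have "t0 - \<epsilon>/2 \<in> T" unfolding T_def
      proof (intro CollectI conjI allI impI)
        fix u assume u: "t0 - \<epsilon> / 2 \<le> u \<and> u \<le> s"
        show "\<eta> x u = 2"
        proof (cases "u < t0")
          case True
          then show ?thesis using e(3)[OF x, of u] h u e(1) by auto
        next
          case False then show ?thesis using allT u by auto
        qed
      qed (use e(1) e(2) t0s in auto)
      then have "t0 \<le> t0 - \<epsilon>/2" unfolding t0_def using bdd by (rule cInf_lower)
      then show False using e(1) by auto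
    qed
    then have "t0 \<in> on x" using update_2[of E rc on tr "\<lambda>y. \<eta> y (t0 - \<epsilon>/2)" x t0] e(4) C2 by auto
    then show ?thesis using pos by auto
  qed simp
  then show ?thesis using t00 t0s allT by blast
qed




definition Pset :: "('v loc \<times> real) set \<Rightarrow> 'v \<Rightarrow> real set" where
  "Pset R x = {s. \<exists>c<s. (\<forall>r. c \<le> r \<and> r \<le> s \<longrightarrow> (Vtx x, r) \<in> R) \<and>
      \<not> (\<exists>t'>s. \<forall>r. s < r \<and> r < t' \<longrightarrow> (Vtx x, r) \<in> R)}"

lemma mid_left: "(a::real) < b \<Longrightarrow> 0 < d \<Longrightarrow> \<exists>r. a < r \<and> r < b \<and> b - d < r"
  by (intro exI[of _ "(max a (b-d) + b)/2"]) (auto simp: max_def)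

lemma mid_right: "(a::real) < b \<Longrightarrow> 0 < d \<Longrightarrow> \<exists>r. a < r \<and> r < b \<and> r < a + d"
  by (intro exI[of _ "(min b (a+d) + a)/2"]) (auto simp: min_def)

lemma base_ofI: "(a, t) \<in> R \<Longrightarrow> \<delta> > 0 \<Longrightarrow> (\<And>\<epsilon>. 0 < \<epsilon> \<Longrightarrow> \<epsilon> < \<delta> \<Longrightarrow> (a, t - \<epsilon>) \<notin> R) \<Longrightarrow> (a, t) \<in> base_of R"
  unfolding base_of_def by blast

locale core =
  fixes V :: "'v set" and E :: "'v set set" and rc on :: "'v \<Rightarrow> real set" and tr :: "'v set \<Rightarrow> real set"
    and \<eta> :: "'v \<Rightarrow> real \<Rightarrow> nat" and R :: "('v loc \<times> real) set"
  assumes gr: "graph V E"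
    and traj: "seis_traj V E rc on tr \<eta>"
    and Rsub: "\<And>a t. (a, t) \<in> R \<Longrightarrow> 0 \<le> t \<and> a \<in> locs V E"
    and Rcl: "\<And>x t. 0 \<le> t \<Longrightarrow> (Vtx x, t) \<notin> R \<Longrightarrow> \<exists>\<delta>>0. \<forall>r. \<bar>r - t\<bar> < \<delta> \<longrightarrow> (Vtx x, r) \<notin> R"
    and oo: "onset_ordered rc on R"
    and good: "good_for \<eta> R"
    and G1: "\<And>x y a b t. x \<noteq> y \<Longrightarrow> (Vtx x, a) \<in> R \<Longrightarrow> (Vtx y, b) \<in> R \<Longrightarrow> t \<in> on x \<Longrightarrow> t \<notin> on y"
    and G2: "\<And>x y a b s. (Vtx x, a) \<in> R \<Longrightarrow> (Vtx y, b) \<in> R \<Longrightarrow> s \<in> on y \<Longrightarrow> s \<notin> Pset R x"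
    and G3: "\<And>x y a b t. (Vtx x, a) \<in> R \<Longrightarrow> (Vtx y, b) \<in> R \<Longrightarrow> {x, y} \<in> E \<Longrightarrow> t \<in> tr {x, y} \<Longrightarrow>
               t \<notin> rc x \<and> t \<notin> on x"
begin

lemma inV: "(Vtx x, t) \<in> R \<Longrightarrow> x \<in> V"
  using Rsub[of "Vtx x" t] unfolding locs_def by auto

lemma closed_left:
  assumes "a < b" "0 \<le> b" "\<And>r. a < r \<Longrightarrow> r < b \<Longrightarrow> (Vtx x, r) \<in> R"
  shows "(Vtx x, b) \<in> R"
proof (rule ccontr)
  assume "(Vtx x, b) \<notin> R"
  then obtain d where d: "d > 0" "\<forall>r. \<bar>r - b\<bar> < d \<longrightarrow> (Vtx x, r) \<notin> R" using Rcl assms(2) by blast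
  obtain r where "a < r" "r < b" "b - d < r" using mid_left[OF assms(1) d(1)] by blast
  then have "a < r" "r < b" "\<bar>r - b\<bar> < d" by auto
  then show False using d(2) assms(3) by blast
qed

lemma closed_right:
  assumes "a < b" "0 \<le> a" "\<And>r. a < r \<Longrightarrow> r < b \<Longrightarrow> (Vtx x, r) \<in> R"
  shows "(Vtx x, a) \<in> R"
proof (rule ccontr)
  assume "(Vtx x, a) \<notin> R"
  then obtain d where d: "d > 0" "\<forall>r. \<bar>r - a\<bar> < d \<longrightarrow> (Vtx x, r) \<notin> R" using Rcl assms(2) by blast
  obtain r where "a < r" "r < b" "r < a + d" using mid_right[OF assms(1) d(1)] by blast
  then have "a < r" "r < b" "\<bar>r - a\<bar> < d" by auto
  then show False using d(2) assms(3) by blast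
qed

lemma inR_entry:
  assumes x: "x \<in> V" and s: "0 \<le> s" "(Vtx x, s) \<in> R" "\<eta> x s = 2"
  shows "\<exists>t0. 0 < t0 \<and> t0 \<le> s \<and> t0 \<in> on x \<and> (\<forall>u. t0 \<le> u \<and> u \<le> s \<longrightarrow> \<eta> x u = 2 \<and> (Vtx x, u) \<in> R)"
proof -
  obtain t0 where t0: "0 \<le> t0" "t0 \<le> s" "\<forall>u. t0 \<le> u \<and> u \<le> s \<longrightarrow> \<eta> x u = 2" "t0 = 0 \<or> (0 < t0 \<and> t0 \<in> on x)"
    using entry[OF traj x s(1) s(3)] by blast
  have inR: "(Vtx x, u) \<in> R" if u: "t0 \<le> u" "u \<le> s" for u
  proof (rule ccontr)
    assume nu: "(Vtx x, u) \<notin> R"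
    define Q where "Q = {r. u \<le> r \<and> r \<le> s \<and> (Vtx x, r) \<in> R}"
    have sQ: "s \<in> Q" using u s unfolding Q_def by auto
    have bdd: "bdd_below Q" unfolding Q_def by (rule bdd_belowI[of _ u]) auto
    define v where "v = Inf Q"
    have uv: "u \<le> v" unfolding v_def using sQ by (intro cInf_greatest) (auto simp: Q_def)
    have vs: "v \<le> s" unfolding v_def using sQ bdd by (rule cInf_lower)
    have vR: "(Vtx x, v) \<in> R"
    proof (rule ccontr)
      assume "(Vtx x, v) \<notin> R"
      then obtain d where d: "d > 0" "\<forall>r. \<bar>r - v\<bar> < d \<longrightarrow> (Vtx x, r) \<notin> R"
        using Rcl[of v x] uv u t0(1) by auto
      obtain r where "r \<in> Q" "r < v + d" using cInf_less_iff[of Q "v + d"] sQ bdd d(1) unfolding v_def by auto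
      moreover have "v \<le> r" unfolding v_def using \<open>r \<in> Q\<close> bdd by (rule cInf_lower)
      ultimately show False using d(2)[rule_format, of r] unfolding Q_def by auto
    qed
    have uv': "u < v" using uv vR nu by (cases "u = v") auto
    have "(Vtx x, v) \<in> base_of R"
    proof (rule base_ofI[OF vR])
      show "0 < v - u" using uv' by simp
      fix \<epsilon> :: real assume e: "0 < \<epsilon>" "\<epsilon> < v - u"
      show "(Vtx x, v - \<epsilon>) \<notin> R"
      proof
        assume "(Vtx x, v - \<epsilon>) \<in> R"
        then have "v - \<epsilon> \<in> Q" unfolding Q_def using e vs by auto
        then have "v \<le> v - \<epsilon>" unfolding v_def using bdd by (rule cInf_lower)
        then show False using e by auto
      qed
    qed
    moreover have "\<eta> x v = 2" using t0(3) uv vs u by auto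
    ultimately show False using good unfolding good_for_def by blast
  qed
  have "t0 \<noteq> 0"
  proof
    assume z: "t0 = 0"
    have R0: "(Vtx x, 0) \<in> R" using inR[of 0] z s by auto
    have "(Vtx x, 0) \<in> base_of R"
    proof (rule base_ofI[OF R0, of 1])
      fix \<epsilon> :: real assume "0 < \<epsilon>"
      then show "(Vtx x, 0 - \<epsilon>) \<notin> R" using Rsub[of "Vtx x" "0 - \<epsilon>"] by auto
    qed simp
    moreover have "\<eta> x 0 = 2" using t0(3) z s by auto
    ultimately show False using good unfolding good_for_def by blast
  qed
  then have "0 < t0" "t0 \<in> on x" using t0(1,4) by auto
  then show ?thesis using t0(2,3) inR by (intro exI[of _ t0]) auto
qed

lemma rc_kills:
  assumes x: "x \<in> V" and "t0 < s'" "\<forall>u. t0 \<le> u \<and> u \<le> s' \<longrightarrow> \<eta> x u = 2" "s' \<in> rc x" "0 \<le> t0"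
  shows False
proof -
  have pos: "s' > 0" using assms by auto
  obtain \<epsilon> where e: "\<epsilon> > 0" "\<epsilon> \<le> s'"
      "\<And>y r. y \<in> V \<Longrightarrow> y = x \<or> {x, y} \<in> E \<Longrightarrow> s' - \<epsilon> < r \<Longrightarrow> r < s' \<Longrightarrow> \<eta> y r = \<eta> y (s' - \<epsilon>/2)"
      "\<eta> x s' = seis_update E rc on tr (\<lambda>y. \<eta> y (s' - \<epsilon>/2)) x s'"
    using traj_pre[OF traj x pos] by blast
  obtain v where v: "t0 < v" "v < s'" "s' - \<epsilon> < v" using mid_left[OF assms(2) e(1)] by blast
  have "\<eta> x (s' - \<epsilon>/2) = 2" using e(3)[OF x _ v(3) v(2)] assms(3) v by auto
  then have "\<eta> x s' = 0" using e(4) assms(4) unfolding seis_update_def by simp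
  then show False using assms(2,3) by auto
qed

lemma one_dir:
  assumes x: "x \<in> V" and y: "y \<in> V"
    and tx: "0 < tx" "tx < ty" "ty \<le> s" "tx \<in> on x" "\<forall>u. tx \<le> u \<and> u \<le> s \<longrightarrow> \<eta> x u = 2 \<and> (Vtx x, u) \<in> R"
    and ty: "ty \<in> on y" "(Vtx y, ty) \<in> R"
  shows False
proof -
  have kill: False if t': "ty < t'" "\<forall>r. tx < r \<and> r < t' \<longrightarrow> (Vtx x, r) \<in> R" for t'
  proof -
    have "{Vtx x} \<times> {tx<..<t'} \<subseteq> R" using t' by auto
    moreover have "(Vtx x, tx) \<in> R" using tx by auto
    moreover have "tx < t'" using tx t' by auto
    ultimately have "\<exists>s'. tx < s' \<and> s' < ty \<and> s' \<in> rc x"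
      using oo[unfolded onset_ordered_def, rule_format, of tx x t' ty y] tx(2,4) ty t'(1) by blast
    then obtain s' where s': "tx < s'" "s' < ty" "s' \<in> rc x" by blast
    show False using rc_kills[OF x s'(1) _ s'(3)] tx s' by auto
  qed
  show False
  proof (cases "ty < s")
    case True
    show False by (rule kill[of s]) (use True tx in auto)
  next
    case False
    then have tys: "ty = s" using tx by auto
    show False
    proof (cases "\<exists>t'>s. \<forall>r. s < r \<and> r < t' \<longrightarrow> (Vtx x, r) \<in> R")
      case True
      then obtain t' where t': "t' > s" "\<forall>r. s < r \<and> r < t' \<longrightarrow> (Vtx x, r) \<in> R" by blast
      have "\<forall>r. tx < r \<and> r < t' \<longrightarrow> (Vtx x, r) \<in> R"
      proof (intro allI impI)
        fix r assume r: "tx < r \<and> r < t'"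
        show "(Vtx x, r) \<in> R" using t'(2)[rule_format, of r] tx(5)[rule_format, of r] r by (cases "r \<le> s") auto
      qed
      then show False using kill[of t'] t' tys by auto
    next
      case False
      then have "s \<in> Pset R x" unfolding Pset_def using tx by (intro CollectI exI[of _ tx]) auto
      moreover have "(Vtx x, tx) \<in> R" using tx by auto
      ultimately show False using G2[of x tx y ty s] ty tys by auto
    qed
  qed
qed

lemma claim1:
  assumes x: "x \<in> V" and y: "y \<in> V" and t: "0 \<le> t" "(Vtx x, t) \<in> R" "(Vtx y, t) \<in> R"
    and e: "\<eta> x t = 2" "\<eta> y t = 2"
  shows "x = y"
proof (rule ccontr)
  assume ne: "x \<noteq> y"
  obtain tx where tx: "0 < tx" "tx \<le> t" "tx \<in> on x" "\<forall>u. tx \<le> u \<and> u \<le> t \<longrightarrow> \<eta> x u = 2 \<and> (Vtx x, u) \<in> R"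
    using inR_entry[OF x t(1,2) e(1)] by blast
  obtain ty where ty: "0 < ty" "ty \<le> t" "ty \<in> on y" "\<forall>u. ty \<le> u \<and> u \<le> t \<longrightarrow> \<eta> y u = 2 \<and> (Vtx y, u) \<in> R"
    using inR_entry[OF y t(1,3) e(2)] by blast
  have "tx \<noteq> ty" using G1[OF ne t(2) t(3) tx(3)] ty(3) by auto
  then consider "tx < ty" | "ty < tx" by linarith
  then show False
  proof cases
    case 1
    then show False using one_dir[OF x y tx(1) 1 ty(2) tx(3) tx(4) ty(3)] ty by auto
  next
    case 2
    then show False using one_dir[OF y x ty(1) 2 tx(2) ty(3) ty(4) tx(3)] tx by auto
  qed
qed

end



context core begin

lemma seg_mid:
  assumes x: "x \<in> V" and ab: "0 \<le> a" "a < t" "t < b" and xa: "\<eta> x a = 1" and ton: "t \<in> on x"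
    and non: "\<forall>s. a < s \<and> s < t \<longrightarrow> s \<notin> on x" and norc: "\<forall>s. t < s \<and> s < b \<longrightarrow> s \<notin> rc x"
    and brc: "b \<notin> rc x"
  shows "\<forall>u. a \<le> u \<and> u \<le> b \<longrightarrow> ((u < t \<and> \<eta> x u = 1) \<or> (t \<le> u \<and> \<eta> x u = 2))"
proof (rule inv[OF traj x ab(1), where P = "\<lambda>u c. (u < t \<and> c = 1) \<or> (t \<le> u \<and> c = 2)"])
  show "a \<le> b" using ab by simp
  show "(a < t \<and> \<eta> x a = 1) \<or> (t \<le> a \<and> \<eta> x a = 2)" using ab xa by simp
next
  fix u c assume u: "a \<le> u" "u < b" and P: "(u < t \<and> c = 1) \<or> (t \<le> u \<and> c = 2)"
  show "\<exists>\<delta>>0. \<forall>w. u < w \<and> w < u + \<delta> \<longrightarrow> (w < t \<and> c = 1) \<or> (t \<le> w \<and> c = 2)"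
  proof (cases "u < t")
    case True
    then show ?thesis using P by (intro exI[of _ "t - u"]) auto
  next
    case False
    then show ?thesis using P by (intro exI[of _ 1]) auto
  qed
next
  fix u assume u: "a < u" "u \<le> b"
  show "\<exists>\<delta>>0. \<forall>v pre. a \<le> v \<and> v < u \<and> u - \<delta> < v \<and> ((v < t \<and> pre x = 1) \<or> (t \<le> v \<and> pre x = 2)) \<longrightarrow>
          (u < t \<and> seis_update E rc on tr pre x u = 1) \<or> (t \<le> u \<and> seis_update E rc on tr pre x u = 2)"
  proof (cases "u \<le> t")
    case True
    show ?thesis
    proof (intro exI[of _ 1] conjI allI impI)
      fix v and pre :: "'v \<Rightarrow> nat"
      assume h: "a \<le> v \<and> v < u \<and> u - 1 < v \<and> ((v < t \<and> pre x = 1) \<or> (t \<le> v \<and> pre x = 2))"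
      then have p1: "pre x = 1" using True by auto
      show "(u < t \<and> seis_update E rc on tr pre x u = 1) \<or> (t \<le> u \<and> seis_update E rc on tr pre x u = 2)"
      proof (cases "u = t")
        case True
        then show ?thesis using p1 ton unfolding seis_update_def by simp
      next
        case False
        then have "u < t" "u \<notin> on x" using \<open>u \<le> t\<close> non u by auto
        then show ?thesis using p1 unfolding seis_update_def by simp
      qed
    qed simp
  next
    case False
    show ?thesis
    proof (intro exI[of _ "u - t"] conjI allI impI)
      show "0 < u - t" using False by simp
      fix v and pre :: "'v \<Rightarrow> nat"
      assume h: "a \<le> v \<and> v < u \<and> u - (u - t) < v \<and> ((v < t \<and> pre x = 1) \<or> (t \<le> v \<and> pre x = 2))"
      then have p2: "pre x = 2" by auto
      have "u \<notin> rc x" using norc brc u False by (cases "u = b") auto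
      then show "(u < t \<and> seis_update E rc on tr pre x u = 1) \<or> (t \<le> u \<and> seis_update E rc on tr pre x u = 2)"
        using p2 False unfolding seis_update_def by simp
    qed
  qed
qed

lemma seg_last:
  assumes x: "x \<in> V" and ab: "0 \<le> a" "a < b" and xa: "\<eta> x a = 1"
    and hc: "\<forall>t. a < t \<and> t < b \<and> t \<in> on x \<longrightarrow> (\<forall>s. t < s \<and> s < b \<longrightarrow> s \<notin> rc x)"
  shows "\<forall>u. a < u \<and> u < b \<longrightarrow> \<eta> x u \<noteq> 0"
proof (intro allI impI)
  fix u assume u: "a < u \<and> u < b"
  let ?P = "\<lambda>w c. c = (1::nat) \<or> (c = 2 \<and> (\<exists>t. t \<in> on x \<and> a < t \<and> t \<le> w))"
  have "\<forall>w. a \<le> w \<and> w \<le> u \<longrightarrow> ?P w (\<eta> x w)"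
  proof (rule inv[OF traj x ab(1), where P = ?P])
    show "a \<le> u" using u by simp
    show "?P a (\<eta> x a)" using xa by simp
  next
    fix w c assume "a \<le> w" "w < u" "?P w c"
    then show "\<exists>\<delta>>0. \<forall>w'. w < w' \<and> w' < w + \<delta> \<longrightarrow> ?P w' c"
      by (intro exI[of _ 1]) force
  next
    fix w assume w: "a < w" "w \<le> u"
    show "\<exists>\<delta>>0. \<forall>v pre. a \<le> v \<and> v < w \<and> w - \<delta> < v \<and> ?P v (pre x) \<longrightarrow> ?P w (seis_update E rc on tr pre x w)"
    proof (intro exI[of _ 1] conjI allI impI)
      fix v and pre :: "'v \<Rightarrow> nat"
      assume h: "a \<le> v \<and> v < w \<and> w - 1 < v \<and> ?P v (pre x)"
      show "?P w (seis_update E rc on tr pre x w)"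
      proof (cases "pre x = 1")
        case True
        then show ?thesis using w unfolding seis_update_def by auto
      next
        case False
        then obtain t where t: "pre x = 2" "t \<in> on x" "a < t" "t \<le> v" using h by auto
        then have "w \<notin> rc x" using hc[rule_format, of t w] h w u by auto
        then show ?thesis using t h unfolding seis_update_def by auto
      qed
    qed simp
  qed
  then have "?P u (\<eta> x u)" using u by auto
  then show "\<eta> x u \<noteq> 0" by auto
qed

lemma trans_b:
  assumes x: "x \<in> V" and y: "y \<in> V" and e: "{x, y} \<in> E" and tb: "0 \<le> t" "t < b"
    and x2: "\<forall>u. t \<le> u \<and> u < b \<longrightarrow> \<eta> x u = 2" and btr: "b \<in> tr {x, y}"
    and bon: "b \<notin> on y" and brc: "b \<notin> rc y" and n2: "\<eta> y b \<noteq> 2"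
  shows "\<eta> y b = 1"
proof -
  have pos: "b > 0" using tb by auto
  obtain \<epsilon> where eps: "\<epsilon> > 0" "\<epsilon> \<le> b"
      "\<And>z r. z \<in> V \<Longrightarrow> z = y \<or> {y, z} \<in> E \<Longrightarrow> b - \<epsilon> < r \<Longrightarrow> r < b \<Longrightarrow> \<eta> z r = \<eta> z (b - \<epsilon>/2)"
      "\<eta> y b = seis_update E rc on tr (\<lambda>z. \<eta> z (b - \<epsilon>/2)) y b"
    using traj_pre[OF traj y pos] by blast
  have eyx: "{y, x} \<in> E" using e by (simp add: insert_commute)
  obtain v where v: "t < v" "v < b" "b - \<epsilon> < v" using mid_left[OF tb(2) eps(1)] by blast
  have px: "\<eta> x (b - \<epsilon>/2) = 2" using eps(3)[OF x _ v(3) v(2)] eyx x2 v by auto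
  have "\<eta> y (b - \<epsilon>/2) \<in> {0,1,2}" using traj_range[OF traj y, of "b - \<epsilon>/2"] eps(1,2) by auto
  moreover have trb: "b \<in> tr {y, x}" using btr by (simp add: insert_commute)
  ultimately show ?thesis
    using eps(4) bon brc n2 px eyx unfolding seis_update_def by (auto split: if_splits)
qed

end



context core begin

lemma edge_ne: "{x, y} \<in> E \<Longrightarrow> x \<noteq> y"
  using gr unfolding graph_def by (metis doubleton_eq_iff insert_absorb2)

lemma claim2:
  assumes p: "is_path E xs ts" and pa: "potentially_active rc on tr xs ts"
    and ps: "path_set xs ts \<subseteq> R" and h1: "\<eta> (hd xs) (ts ! 0) = 1"
  shows "active_path tr \<eta> xs ts"
proof -
  define m where "m = length xs"
  have m1: "m \<ge> 1" and lts: "length ts = m + 1" and ts0: "0 \<le> ts ! 0"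
    and mono: "\<And>i. i < m \<Longrightarrow> ts ! i < ts ! (i+1)"
    and edges: "\<And>i. i + 1 < m \<Longrightarrow> {xs ! i, xs ! (i+1)} \<in> E"
    using p unfolding is_path_def m_def by (auto simp: Suc_le_eq)
  have tsnn: "0 \<le> ts ! i" if "i \<le> m" for i
    using that
  proof (induction i)
    case 0 then show ?case using ts0 by simp
  next
    case (Suc i)
    then show ?case using mono[of i] by simp
  qed
  have seg: "(Vtx (xs ! i), r) \<in> R" if "i < m" "ts ! i < r" "r < ts ! (i+1)" for i r
  proof -
    have "(Vtx (xs ! i), r) \<in> path_set xs ts" unfolding path_set_def using that m_def by auto
    then show ?thesis using ps by auto
  qed
  have inVi: "xs ! i \<in> V" if im: "i < m" for i
  proof -
    obtain r where "ts ! i < r" "r < ts ! (i+1)" using dense[OF mono[OF im]] by blast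
    then show ?thesis using seg[OF im] inV by blast
  qed
  have Rl: "(Vtx (xs ! i), ts ! (i+1)) \<in> R" if "i < m" for i
    by (rule closed_left[OF mono[OF that]]) (use tsnn[of "i+1"] that seg in auto)
  have Rr: "(Vtx (xs ! i), ts ! i) \<in> R" if "i < m" for i
    by (rule closed_right[OF mono[OF that]]) (use tsnn[of i] that seg in auto)
  have trl: "ts ! (i+1) \<in> tr {xs ! i, xs ! (i+1)}" if "i + 1 < m" for i
    using pa that unfolding potentially_active_def m_def by blast
  have onl: "\<exists>t. ts ! i < t \<and> t < ts ! (i+1) \<and> t \<in> on (xs ! i) \<and>
           (\<forall>s. ts ! i < s \<and> s < t \<longrightarrow> s \<notin> on (xs ! i)) \<and>
           (\<forall>s. t < s \<and> s < ts ! (i+1) \<longrightarrow> s \<notin> rc (xs ! i))" if "i + 1 < m" for i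
    using pa that unfolding potentially_active_def m_def by blast
  have stp: "(\<forall>u. ts ! i < u \<and> u < ts ! (i+1) \<longrightarrow> \<eta> (xs ! i) u \<noteq> 0) \<and>
             \<eta> (xs ! i) (ts ! (i+1)) = 2 \<and> \<eta> (xs ! (i+1)) (ts ! (i+1)) = 1"
    if i: "i + 1 < m" and e1: "\<eta> (xs ! i) (ts ! i) = 1" for i
  proof -
    let ?x = "xs ! i" and ?y = "xs ! (i+1)" and ?a = "ts ! i" and ?b = "ts ! (i+1)"
    have im: "i < m" using i by simp
    obtain t where t: "?a < t" "t < ?b" "t \<in> on ?x" "\<forall>s. ?a < s \<and> s < t \<longrightarrow> s \<notin> on ?x"
        "\<forall>s. t < s \<and> s < ?b \<longrightarrow> s \<notin> rc ?x"
      using onl[OF i] by blast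
    have xV: "?x \<in> V" and yV: "?y \<in> V" using inVi im i by auto
    have exy: "{?x, ?y} \<in> E" using edges[OF i] .
    have eyx: "{?y, ?x} \<in> E" using exy by (simp add: insert_commute)
    have btr: "?b \<in> tr {?x, ?y}" using trl[OF i] .
    have btr': "?b \<in> tr {?y, ?x}" using btr by (simp add: insert_commute)
    have xR: "(Vtx ?x, ?a) \<in> R" using Rr[OF im] .
    have yR: "(Vtx ?y, ?b) \<in> R" using Rr[of "i+1"] i by simp
    have brcx: "?b \<notin> rc ?x" using G3[OF xR yR exy btr] by blast
    have G3y: "?b \<notin> rc ?y \<and> ?b \<notin> on ?y" using G3[OF yR xR eyx btr'] by blast
    have S: "\<forall>u. ?a \<le> u \<and> u \<le> ?b \<longrightarrow> ((u < t \<and> \<eta> ?x u = 1) \<or> (t \<le> u \<and> \<eta> ?x u = 2))"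
      using seg_mid[OF xV tsnn[of i] t(1) t(2) e1 t(3) t(4) t(5) brcx] im by simp
    have nz: "\<forall>u. ?a < u \<and> u < ?b \<longrightarrow> \<eta> ?x u \<noteq> 0"
    proof (intro allI impI)
      fix u assume "?a < u \<and> u < ?b"
      then have "(u < t \<and> \<eta> ?x u = 1) \<or> (t \<le> u \<and> \<eta> ?x u = 2)" using S[rule_format, of u] by auto
      then show "\<eta> ?x u \<noteq> 0" by auto
    qed
    have xb: "\<eta> ?x ?b = 2" using S[rule_format, of ?b] t(1,2) by auto
    have x2: "\<forall>u. t \<le> u \<and> u < ?b \<longrightarrow> \<eta> ?x u = 2"
    proof (intro allI impI)
      fix u assume "t \<le> u \<and> u < ?b"
      then show "\<eta> ?x u = 2" using S[rule_format, of u] t(1) by auto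
    qed
    have n2: "\<eta> ?y ?b \<noteq> 2"
    proof
      assume "\<eta> ?y ?b = 2"
      then have "?x = ?y" using claim1[OF xV yV tsnn[of "i+1"] Rl[OF im] yR xb] i by simp
      then show False using edge_ne[OF exy] by simp
    qed
    have "\<eta> ?y ?b = 1"
      using trans_b[OF xV yV exy _ t(2) x2 btr] G3y n2 tsnn[of i] t(1) im by auto
    then show ?thesis using nz xb by simp
  qed
  have Q: "\<eta> (xs ! i) (ts ! i) = 1" if "i < m" for i
    using that
  proof (induction i)
    case 0
    then show ?case using h1 m1 m_def by (cases xs) auto
  next
    case (Suc i)
    then show ?case using stp[of i] by simp
  qed
  have c3: "\<forall>t. ts ! (m-1) < t \<and> t < ts ! m \<and> t \<in> on (xs ! (m-1)) \<longrightarrow>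
              (\<forall>s. t < s \<and> s < ts ! m \<longrightarrow> s \<notin> rc (xs ! (m-1)))"
    using pa unfolding potentially_active_def Let_def m_def by blast
  show ?thesis unfolding active_path_def
  proof (rule conjI)
    show "\<forall>i. i + 1 < length xs \<longrightarrow> \<eta> (xs ! i) (ts ! (i + 1)) = 2 \<and> \<eta> (xs ! (i + 1)) (ts ! (i + 1)) = 1 \<and>
               ts ! (i + 1) \<in> tr {xs ! i, xs ! (i + 1)}"
    proof (intro allI impI)
      fix i assume i: "i + 1 < length xs"
      then have "i + 1 < m" by (simp add: m_def)
      then show "\<eta> (xs ! i) (ts ! (i + 1)) = 2 \<and> \<eta> (xs ! (i + 1)) (ts ! (i + 1)) = 1 \<and>
               ts ! (i + 1) \<in> tr {xs ! i, xs ! (i + 1)}"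
        using stp[of i] Q[of i] trl[of i] by simp
    qed
  next
    show "\<forall>i<length xs. \<forall>t. ts ! i < t \<and> t < ts ! (i + 1) \<longrightarrow> \<eta> (xs ! i) t \<noteq> 0"
    proof (intro allI impI)
      fix i t assume i: "i < length xs" and t: "ts ! i < t \<and> t < ts ! (i + 1)"
      show "\<eta> (xs ! i) t \<noteq> 0"
      proof (cases "i + 1 < m")
        case True
        then show ?thesis using stp[of i] Q[of i] t by simp
      next
        case False
        then have im: "i = m - 1" "i + 1 = m" using i m_def by auto
        have hc: "\<forall>t. ts ! i < t \<and> t < ts ! (i+1) \<and> t \<in> on (xs ! i) \<longrightarrow>
                    (\<forall>s. t < s \<and> s < ts ! (i+1) \<longrightarrow> s \<notin> rc (xs ! i))"
          using c3 im by simp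
        have "i < m" using i m_def by simp
        then show ?thesis
          using seg_last[OF inVi[of i] tsnn[of i] mono[of i] Q[of i] hc] t by simp
      qed
    qed
  qed
qed

end



lemma (in prob_space) point_null:
  assumes d: "distributed M lborel Z f"
  shows "{\<omega> \<in> space M. Z \<omega> = (c::real)} \<in> null_sets M"
proof -
  have Zm: "Z \<in> measurable M lborel" using d by (simp add: distributed_def)
  have eq: "{\<omega> \<in> space M. Z \<omega> = c} = Z -` {c} \<inter> space M" by auto
  have sets: "Z -` {c} \<inter> space M \<in> sets M" using Zm by (intro measurable_sets[OF Zm]) auto
  have "emeasure M (Z -` {c} \<inter> space M) = (\<integral>\<^sup>+x. f x * indicator {c} x \<partial>lborel)"
    using distributed_emeasure[OF d, of "{c}"] by simp
  also have "\<dots> = 0"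
  proof -
    have "AE x in lborel. f x * indicator {c} x = (0::ennreal)"
      using AE_lborel_singleton[of c] by eventually_elim simp
    then show ?thesis by (simp add: nn_integral_0_iff_AE)
  qed
  finally show ?thesis using sets eq by (simp add: null_sets_def)
qed

lemma (in prob_space) null_eq_indep:
  fixes Z :: "'a \<Rightarrow> real"
  assumes ind: "indep_var N W N' U" and phi: "phi \<in> borel_measurable N'" and Zeq: "\<And>\<omega>. Z \<omega> = phi (U \<omega>)"
    and Zd: "distributed M lborel Z f" and g: "g \<in> borel_measurable N"
  shows "{\<omega> \<in> space M. Z \<omega> = g (W \<omega>)} \<in> null_sets M"
proof -
  have rvW: "random_variable N W" using indep_var_rv1[OF ind] .
  have rvU: "random_variable N' U" using indep_var_rv2[OF ind] .
  have eq: "distr M N W \<Otimes>\<^sub>M distr M N' U = distr M (N \<Otimes>\<^sub>M N') (\<lambda>x. (W x, U x))"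
    using ind indep_var_distribution_eq by blast
  define D where "D = {p \<in> space (N \<Otimes>\<^sub>M N'). phi (snd p) = g (fst p)}"
  have Dm: "D \<in> sets (N \<Otimes>\<^sub>M N')" unfolding D_def using g phi by measurable
  have pm: "(\<lambda>x. (W x, U x)) \<in> measurable M (N \<Otimes>\<^sub>M N')" using rvW rvU by (rule measurable_Pair)
  have seq: "{\<omega> \<in> space M. Z \<omega> = g (W \<omega>)} = (\<lambda>x. (W x, U x)) -` D \<inter> space M"
    unfolding D_def Zeq using measurable_space[OF rvW] measurable_space[OF rvU] by (auto simp: space_pair_measure)
  have sets: "(\<lambda>x. (W x, U x)) -` D \<inter> space M \<in> sets M" using measurable_sets[OF pm Dm] .
  interpret Up: prob_space "distr M N' U" by (rule prob_space_distr[OF rvU])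
  have "sets (distr M N W \<Otimes>\<^sub>M distr M N' U) = sets (N \<Otimes>\<^sub>M N')"
    by (intro sets_pair_measure_cong) simp_all
  then have Dm': "D \<in> sets (distr M N W \<Otimes>\<^sub>M distr M N' U)" using Dm by simp
  have "emeasure M ((\<lambda>x. (W x, U x)) -` D \<inter> space M) = emeasure (distr M (N \<Otimes>\<^sub>M N') (\<lambda>x. (W x, U x))) D"
    using emeasure_distr[OF pm Dm] by simp
  also have "\<dots> = emeasure (distr M N W \<Otimes>\<^sub>M distr M N' U) D" using eq by simp
  also have "\<dots> = (\<integral>\<^sup>+w. emeasure (distr M N' U) (Pair w -` D) \<partial>distr M N W)"
    using Up.emeasure_pair_measure_alt[OF Dm'] .
  also have "\<dots> = (\<integral>\<^sup>+w. 0 \<partial>distr M N W)"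
  proof (intro nn_integral_cong)
    fix w assume w: "w \<in> space (distr M N W)"
    then have pw: "Pair w -` D = {u \<in> space N'. phi u = g w}" unfolding D_def by (auto simp: space_pair_measure)
    have pws: "{u \<in> space N'. phi u = g w} \<in> sets N'" using phi by measurable
    have "emeasure (distr M N' U) {u \<in> space N'. phi u = g w} = emeasure M (U -` {u \<in> space N'. phi u = g w} \<inter> space M)"
      using emeasure_distr[OF rvU pws] by simp
    also have "U -` {u \<in> space N'. phi u = g w} \<inter> space M = {\<omega> \<in> space M. Z \<omega> = g w}"
      using measurable_space[OF rvU] unfolding Zeq by auto
    also have "emeasure M \<dots> = 0" using point_null[OF Zd, of "g w"] by (simp add: null_sets_def)
    finally show "emeasure (distr M N' U) (Pair w -` D) = 0" using pw by simp
  qed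
  also have "\<dots> = 0" by simp
  finally show ?thesis using sets seq by (simp add: null_sets_def)
qed

lemma (in prob_space) indep_single_null:
  fixes X :: "'i \<Rightarrow> 'a \<Rightarrow> real"
  assumes ind: "indep_vars (\<lambda>_. borel) X I" and J: "J \<subseteq> I" "i \<in> I" "i \<notin> J"
    and d: "distributed M lborel (X i) f" and h: "h \<in> borel_measurable (PiM J (\<lambda>_. borel))"
  shows "{\<omega> \<in> space M. X i \<omega> = h (\<lambda>j\<in>J. X j \<omega>)} \<in> null_sets M"
proof -
  have ind2: "indep_var (PiM J (\<lambda>_. borel)) (\<lambda>\<omega>. restrict (\<lambda>j. X j \<omega>) J) (PiM {i} (\<lambda>_. borel)) (\<lambda>\<omega>. restrict (\<lambda>j. X j \<omega>) {i})"
    using J by (intro indep_var_restrict[OF ind]) auto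
  have phi: "(\<lambda>v. v i) \<in> borel_measurable (PiM {i} (\<lambda>_. borel :: real measure))"
    by (rule measurable_component_singleton) simp
  have Zeq: "\<And>\<omega>. X i \<omega> = (\<lambda>v. v i) ((\<lambda>j\<in>{i}. X j \<omega>))" by simp
  show ?thesis by (rule null_eq_indep[OF ind2 phi Zeq d h])
qed




definition ssum :: "('c \<Rightarrow> 'w \<Rightarrow> real) \<Rightarrow> (nat \<Rightarrow> 'c) \<Rightarrow> nat \<Rightarrow> 'w \<Rightarrow> real" where
  "ssum X \<sigma> n \<omega> = (\<Sum>k\<le>n. X (\<sigma> k) \<omega>)"

lemma arrivals_ssum: "arrivals (\<lambda>k. X (\<sigma> k) \<omega>) = range (\<lambda>n. ssum X \<sigma> n \<omega>)"
  by (simp add: arrivals_def ssum_def)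

lemma ssum_split: "ssum X \<sigma> n \<omega> = X (\<sigma> n) \<omega> + (\<Sum>k<n. X (\<sigma> k) \<omega>)"
  unfolding ssum_def lessThan_Suc_atMost[symmetric] by (simp add: sum.lessThan_Suc)

lemma (in prob_space) stream_pair_null:
  fixes X :: "'c \<Rightarrow> 'a \<Rightarrow> real"
  assumes ind: "indep_vars (\<lambda>_. borel) X I" and \<sigma>: "inj \<sigma>" "range \<sigma> \<subseteq> I"
    and \<tau>: "range \<tau> \<subseteq> I" "range \<sigma> \<inter> range \<tau> = {}"
    and d: "distributed M lborel (X (\<sigma> n)) f"
  shows "{\<omega> \<in> space M. ssum X \<sigma> n \<omega> = ssum X \<tau> m \<omega>} \<in> null_sets M"
proof -
  define J where "J = \<sigma> ` {..<n} \<union> \<tau> ` {..m}"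
  have JI: "J \<subseteq> I" using \<sigma> \<tau> unfolding J_def by auto
  have iI: "\<sigma> n \<in> I" using \<sigma> by auto
  have iJ: "\<sigma> n \<notin> J"
  proof
    assume "\<sigma> n \<in> J"
    then consider "\<sigma> n \<in> \<sigma> ` {..<n}" | "\<sigma> n \<in> \<tau> ` {..m}" unfolding J_def by blast
    then show False
    proof cases
      case 1 then show False using \<sigma>(1) by (auto dest: injD)
    next
      case 2 then show False using \<tau>(2) by auto
    qed
  qed
  define h where "h v = (\<Sum>k\<le>m. v (\<tau> k)) - (\<Sum>k<n. v (\<sigma> k))" for v :: "'c \<Rightarrow> real"
  have hm: "h \<in> borel_measurable (PiM J (\<lambda>_. borel))"
    unfolding h_def
  proof (intro borel_measurable_diff borel_measurable_sum)
    fix k assume "k \<in> {..m}"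
    then have "\<tau> k \<in> J" unfolding J_def by auto
    then show "(\<lambda>x. x (\<tau> k)) \<in> borel_measurable (PiM J (\<lambda>_. borel))"
      by (rule measurable_component_singleton)
  next
    fix k assume "k \<in> {..<n}"
    then have "\<sigma> k \<in> J" unfolding J_def by auto
    then show "(\<lambda>x. x (\<sigma> k)) \<in> borel_measurable (PiM J (\<lambda>_. borel))"
      by (rule measurable_component_singleton)
  qed
  have "{\<omega> \<in> space M. X (\<sigma> n) \<omega> = h (\<lambda>j\<in>J. X j \<omega>)} \<in> null_sets M"
    by (rule indep_single_null[OF ind JI iI iJ d hm])
  moreover have "{\<omega> \<in> space M. X (\<sigma> n) \<omega> = h (\<lambda>j\<in>J. X j \<omega>)} = {\<omega> \<in> space M. ssum X \<sigma> n \<omega> = ssum X \<tau> m \<omega>}"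
  proof -
    have "h (\<lambda>j\<in>J. X j \<omega>) = (\<Sum>k\<le>m. X (\<tau> k) \<omega>) - (\<Sum>k<n. X (\<sigma> k) \<omega>)" for \<omega>
      unfolding h_def J_def by (intro arg_cong2[where f="(-)"] sum.cong) auto
    then show ?thesis unfolding ssum_split[of X \<sigma> n] by (auto simp: ssum_def)
  qed
  ultimately show ?thesis by simp
qed

lemma (in prob_space) stream_point_null:
  fixes X :: "'c \<Rightarrow> 'a \<Rightarrow> real"
  assumes ind: "indep_vars (\<lambda>_. borel) X I" and \<sigma>: "inj \<sigma>" "range \<sigma> \<subseteq> I"
    and d: "distributed M lborel (X (\<sigma> n)) f"
  shows "{\<omega> \<in> space M. ssum X \<sigma> n \<omega> = p} \<in> null_sets M"
proof -
  define J where "J = \<sigma> ` {..<n}"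
  have JI: "J \<subseteq> I" using \<sigma> unfolding J_def by auto
  have iI: "\<sigma> n \<in> I" using \<sigma> by auto
  have iJ: "\<sigma> n \<notin> J" using \<sigma>(1) unfolding J_def by (auto dest: injD)
  define h where "h v = p - (\<Sum>k<n. v (\<sigma> k))" for v :: "'c \<Rightarrow> real"
  have hm: "h \<in> borel_measurable (PiM J (\<lambda>_. borel))"
    unfolding h_def
  proof (intro borel_measurable_diff borel_measurable_sum)
    fix k assume "k \<in> {..<n}"
    then have "\<sigma> k \<in> J" unfolding J_def by auto
    then show "(\<lambda>x. x (\<sigma> k)) \<in> borel_measurable (PiM J (\<lambda>_. borel))"
      by (rule measurable_component_singleton)
  qed simp
  have "{\<omega> \<in> space M. X (\<sigma> n) \<omega> = h (\<lambda>j\<in>J. X j \<omega>)} \<in> null_sets M"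
    by (rule indep_single_null[OF ind JI iI iJ d hm])
  moreover have "{\<omega> \<in> space M. X (\<sigma> n) \<omega> = h (\<lambda>j\<in>J. X j \<omega>)} = {\<omega> \<in> space M. ssum X \<sigma> n \<omega> = p}"
  proof -
    have "h (\<lambda>j\<in>J. X j \<omega>) = p - (\<Sum>k<n. X (\<sigma> k) \<omega>)" for \<omega>
      unfolding h_def J_def by (intro arg_cong2[where f="(-)"] sum.cong) auto
    then show ?thesis unfolding ssum_split[of X \<sigma> n] by auto
  qed
  ultimately show ?thesis by simp
qed

lemma (in prob_space) exp_neg_null:
  assumes d: "distributed M lborel Z (exponential_density l)"
  shows "{\<omega> \<in> space M. Z \<omega> < 0} \<in> null_sets M"
proof -
  have Zm: "Z \<in> measurable M lborel" using d by (simp add: distributed_def)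
  have eq: "{\<omega> \<in> space M. Z \<omega> < 0} = Z -` {..<0} \<inter> space M" by auto
  have sets: "Z -` {..<0} \<inter> space M \<in> sets M" by (intro measurable_sets[OF Zm]) auto
  have "emeasure M (Z -` {..<0} \<inter> space M) = (\<integral>\<^sup>+x. ennreal (exponential_density l x) * indicator {..<0} x \<partial>lborel)"
    using distributed_emeasure[OF d, of "{..<0}"] by simp
  also have "\<dots> = 0"
  proof -
    have "\<And>x. ennreal (exponential_density l x) * indicator {..<0} x = 0"
      by (simp add: exponential_density_def indicator_def)
    then have "(\<lambda>x. ennreal (exponential_density l x) * indicator {..<0} x) = (\<lambda>x. 0)" by (rule ext)
    then show ?thesis by (simp only:) simp
  qed
  finally show ?thesis using sets eq by (simp add: null_sets_def)
qed




lemma Pset_countable: "countable (Pset R x)"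
proof -
  have ex: "\<exists>r. r \<in> \<rat> \<and> r < s \<and> (\<forall>u. r \<le> u \<and> u \<le> s \<longrightarrow> (Vtx x, u) \<in> R)" if sP: "s \<in> Pset R x" for s
  proof -
    obtain c where c: "c < s" "\<forall>r. c \<le> r \<and> r \<le> s \<longrightarrow> (Vtx x, r) \<in> R" using sP unfolding Pset_def by blast
    obtain r where "r \<in> \<rat>" "c < r" "r < s" using Rats_dense_in_real[OF c(1)] by blast
    then show ?thesis using c by (intro exI[of _ r]) auto
  qed
  define q where "q s = (SOME r. r \<in> \<rat> \<and> r < s \<and> (\<forall>u. r \<le> u \<and> u \<le> s \<longrightarrow> (Vtx x, u) \<in> R))" for s
  have q: "q s \<in> \<rat> \<and> q s < s \<and> (\<forall>u. q s \<le> u \<and> u \<le> s \<longrightarrow> (Vtx x, u) \<in> R)" if "s \<in> Pset R x" for s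
    unfolding q_def by (rule someI_ex[OF ex[OF that]])
  have lt: False if "s1 \<in> Pset R x" "s2 \<in> Pset R x" "s1 < s2" "q s1 = q s2" for s1 s2
  proof -
    have "\<forall>r. s1 < r \<and> r < s2 \<longrightarrow> (Vtx x, r) \<in> R"
      using q[OF that(2)] q[OF that(1)] that(3,4) by auto
    then show False using that(1,3) unfolding Pset_def by blast
  qed
  have "inj_on q (Pset R x)"
  proof (rule inj_onI)
    fix s1 s2 assume "s1 \<in> Pset R x" "s2 \<in> Pset R x" "q s1 = q s2"
    then show "s1 = s2" using lt[of s1 s2] lt[of s2 s1] by (cases "s1 < s2"; cases "s2 < s1") auto
  qed
  moreover have "countable (q ` Pset R x)"
    by (rule countable_subset[OF _ countable_rat]) (use q in auto)
  ultimately show ?thesis using countable_image_inj_on by blast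
qed




lemma countable_case:
  fixes M :: "'w measure" and V :: "'v set" and E :: "'v set set"
    and lam tau :: real and X :: "'v clock \<Rightarrow> 'w \<Rightarrow> real"
    and eta :: "'w \<Rightarrow> 'v \<Rightarrow> real \<Rightarrow> nat" and R :: "('v loc \<times> real) set"
  assumes PS: "prob_space M"
    and gr: "graph V E"
    and GR: "graphical_rep M V E lam tau X"
    and AEt: "AE \<omega> in M. seis_traj V E (rec_lab X \<omega>) (ons_lab X \<omega>) (tra_lab X \<omega>) (eta \<omega>)"
    and clo: "closure_of_open V E R"
    and cW: "countable {x. \<exists>t. (Vtx x, t) \<in> R}"
  shows "AE \<omega> in M.
           onset_ordered (rec_lab X \<omega>) (ons_lab X \<omega>) R \<and> good_for (eta \<omega>) R \<longrightarrow>
             (\<forall>t\<ge>0. \<forall>x\<in>V. \<forall>y\<in>V. (Vtx x, t) \<in> R \<and> (Vtx y, t) \<in> R \<and>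
                 eta \<omega> x t = 2 \<and> eta \<omega> y t = 2 \<longrightarrow> x = y) \<and>
             (\<forall>xs ts. is_path E xs ts \<and>
                 potentially_active (rec_lab X \<omega>) (ons_lab X \<omega>) (tra_lab X \<omega>) xs ts \<and>
                 path_set xs ts \<subseteq> R \<and> eta \<omega> (hd xs) (ts ! 0) = 1 \<longrightarrow>
                 active_path (tra_lab X \<omega>) (eta \<omega>) xs ts)"
proof -
  interpret prob_space M by (rule PS)
  define W where "W = {x. \<exists>t. (Vtx x, t) \<in> R}"
  have cW': "countable W" using cW unfolding W_def .
  have WV: "W \<subseteq> V" using R_sub(1)[OF clo] unfolding W_def locs_def by auto
  have ind: "indep_vars (\<lambda>_. borel) X (clock_index V E)" using GR unfolding graphical_rep_def by blast
  have dR: "\<And>x n. x \<in> V \<Longrightarrow> distributed M lborel (X (RecC x n)) (exponential_density tau)"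
    and dO: "\<And>x n. x \<in> V \<Longrightarrow> distributed M lborel (X (OnsC x n)) (exponential_density 1)"
    and dT: "\<And>e n. e \<in> E \<Longrightarrow> distributed M lborel (X (TraC e n)) (exponential_density (lam * tau))"
    using GR unfolding graphical_rep_def by blast+
  define EW where "EW = {e \<in> E. \<exists>x\<in>W. \<exists>y\<in>W. e = {x, y}}"
  have cEW: "countable EW"
  proof (rule countable_subset)
    show "EW \<subseteq> (\<lambda>p. {fst p, snd p}) ` (W \<times> W)"
    proof
      fix e assume "e \<in> EW"
      then obtain x y where "x \<in> W" "y \<in> W" "e = {x, y}" unfolding EW_def by blast
      then show "e \<in> (\<lambda>p. {fst p, snd p}) ` (W \<times> W)" by (intro image_eqI[where x="(x,y)"]) auto
    qed
    show "countable ((\<lambda>p. {fst p, snd p}) ` (W \<times> W))" using cW' by auto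
  qed
  define SS where "SS = RecC ` W \<union> OnsC ` W \<union> TraC ` EW"
  have cSS: "countable SS" unfolding SS_def using cW' cEW by auto
  have SSp: "inj \<sigma> \<and> range \<sigma> \<subseteq> clock_index V E \<and> (\<forall>n. \<exists>f. distributed M lborel (X (\<sigma> n)) f)" if sS: "\<sigma> \<in> SS" for \<sigma>
  proof -
    consider (r) x where "x \<in> W" "\<sigma> = RecC x" | (o) x where "x \<in> W" "\<sigma> = OnsC x" | (t) e where "e \<in> EW" "\<sigma> = TraC e"
      using sS unfolding SS_def by blast
    then show ?thesis
    proof cases
      case r
      then have "x \<in> V" using WV by auto
      then show ?thesis using r dR unfolding clock_index_def by (auto simp: inj_def)
    next
      case o
      then have "x \<in> V" using WV by auto
      then show ?thesis using o dO unfolding clock_index_def by (auto simp: inj_def)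
    next
      case t
      then have "e \<in> E" unfolding EW_def by auto
      then show ?thesis using t dT unfolding clock_index_def by (auto simp: inj_def)
    qed
  qed
  define NP where "NP = {p \<in> SS \<times> SS. range (fst p) \<inter> range (snd p) = {}}"
  define N1 where "N1 = (\<Union>p\<in>NP \<times> (UNIV :: (nat \<times> nat) set).
      {\<omega> \<in> space M. ssum X (fst (fst p)) (fst (snd p)) \<omega> = ssum X (snd (fst p)) (snd (snd p)) \<omega>})"
  have N1: "N1 \<in> null_sets M" unfolding N1_def
  proof (rule null_sets_UN')
    show "countable (NP \<times> (UNIV :: (nat \<times> nat) set))" unfolding NP_def using cSS by auto
  next
    fix p assume p: "p \<in> NP \<times> (UNIV :: (nat \<times> nat) set)"
    then have s1: "fst (fst p) \<in> SS" and s2: "snd (fst p) \<in> SS" and dj: "range (fst (fst p)) \<inter> range (snd (fst p)) = {}"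
      unfolding NP_def by auto
    obtain f where f: "distributed M lborel (X (fst (fst p) (fst (snd p)))) f" using SSp[OF s1] by blast
    show "{\<omega> \<in> space M. ssum X (fst (fst p)) (fst (snd p)) \<omega> = ssum X (snd (fst p)) (snd (snd p)) \<omega>} \<in> null_sets M"
    proof -
      have "inj (fst (fst p))" "range (fst (fst p)) \<subseteq> clock_index V E" "range (snd (fst p)) \<subseteq> clock_index V E"
        using SSp[OF s1] SSp[OF s2] by auto
      from stream_pair_null[OF ind this(1,2) this(3) dj f] show ?thesis .
    qed
  qed
  define I2 where "I2 = (SIGMA x:W. W \<times> (Pset R x \<times> (UNIV :: nat set)))"
  define N2 where "N2 = (\<Union>z\<in>I2. {\<omega> \<in> space M. ssum X (OnsC (fst (snd z))) (snd (snd (snd z))) \<omega> = fst (snd (snd z))})"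
  have N2: "N2 \<in> null_sets M" unfolding N2_def
  proof (rule null_sets_UN')
    show "countable I2" unfolding I2_def using cW' Pset_countable
      by (intro countable_SIGMA) auto
  next
    fix z assume z: "z \<in> I2"
    then have s: "OnsC (fst (snd z)) \<in> SS" unfolding I2_def SS_def by auto
    obtain f where f: "distributed M lborel (X (OnsC (fst (snd z)) (snd (snd (snd z))))) f" using SSp[OF s] by blast
    show "{\<omega> \<in> space M. ssum X (OnsC (fst (snd z))) (snd (snd (snd z))) \<omega> = fst (snd (snd z))} \<in> null_sets M"
    proof -
      have "inj (OnsC (fst (snd z)))" "range (OnsC (fst (snd z))) \<subseteq> clock_index V E" using SSp[OF s] by auto
      from stream_point_null[OF ind this f] show ?thesis .
    qed
  qed
  have AEN: "AE \<omega> in M. \<omega> \<notin> N1 \<union> N2" using N1 N2 by (intro AE_not_in) auto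
  show ?thesis using AEN AEt AE_space
  proof eventually_elim
    fix \<omega> assume nN: "\<omega> \<notin> N1 \<union> N2" and traj: "seis_traj V E (rec_lab X \<omega>) (ons_lab X \<omega>) (tra_lab X \<omega>) (eta \<omega>)"
      and sp: "\<omega> \<in> space M"
    have lab: "ons_lab X \<omega> x = range (\<lambda>n. ssum X (OnsC x) n \<omega>)"
      "rec_lab X \<omega> x = range (\<lambda>n. ssum X (RecC x) n \<omega>)"
      "tra_lab X \<omega> e = range (\<lambda>n. ssum X (TraC e) n \<omega>)" for x e
      unfolding ons_lab_def rec_lab_def tra_lab_def using arrivals_ssum by metis+
    have coinc: False if "\<sigma> \<in> SS" "\<tau> \<in> SS" "range \<sigma> \<inter> range \<tau> = {}" "ssum X \<sigma> n \<omega> = ssum X \<tau> m \<omega>" for \<sigma> \<tau> n m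
    proof -
      have "((\<sigma>, \<tau>), (n, m)) \<in> NP \<times> (UNIV :: (nat \<times> nat) set)" unfolding NP_def using that by auto
      then have "\<omega> \<in> N1" unfolding N1_def
        by (rule UN_I) (use that(4) sp in simp)
      then show False using nN by auto
    qed
    show "onset_ordered (rec_lab X \<omega>) (ons_lab X \<omega>) R \<and> good_for (eta \<omega>) R \<longrightarrow>
             (\<forall>t\<ge>0. \<forall>x\<in>V. \<forall>y\<in>V. (Vtx x, t) \<in> R \<and> (Vtx y, t) \<in> R \<and>
                 eta \<omega> x t = 2 \<and> eta \<omega> y t = 2 \<longrightarrow> x = y) \<and>
             (\<forall>xs ts. is_path E xs ts \<and>
                 potentially_active (rec_lab X \<omega>) (ons_lab X \<omega>) (tra_lab X \<omega>) xs ts \<and>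
                 path_set xs ts \<subseteq> R \<and> eta \<omega> (hd xs) (ts ! 0) = 1 \<longrightarrow>
                 active_path (tra_lab X \<omega>) (eta \<omega>) xs ts)"
    proof (intro impI)
      assume og: "onset_ordered (rec_lab X \<omega>) (ons_lab X \<omega>) R \<and> good_for (eta \<omega>) R"
      have C: "core V E (rec_lab X \<omega>) (ons_lab X \<omega>) (tra_lab X \<omega>) (eta \<omega>) R"
      proof (rule core.intro)
        show "graph V E" by (rule gr)
        show "seis_traj V E (rec_lab X \<omega>) (ons_lab X \<omega>) (tra_lab X \<omega>) (eta \<omega>)" by (rule traj)
        show "\<And>a t. (a, t) \<in> R \<Longrightarrow> 0 \<le> t \<and> a \<in> locs V E" using R_sub[OF clo] by blast
        show "\<And>x t. 0 \<le> t \<Longrightarrow> (Vtx x, t) \<notin> R \<Longrightarrow> \<exists>\<delta>>0. \<forall>r. \<bar>r - t\<bar> < \<delta> \<longrightarrow> (Vtx x, r) \<notin> R"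
          using R_closed[OF clo] by blast
        show "onset_ordered (rec_lab X \<omega>) (ons_lab X \<omega>) R" using og by blast
        show "good_for (eta \<omega>) R" using og by blast
      next
        fix x y a b t assume ne: "x \<noteq> y" and xa: "(Vtx x, a) \<in> R" and yb: "(Vtx y, b) \<in> R"
          and tx: "t \<in> ons_lab X \<omega> x"
        show "t \<notin> ons_lab X \<omega> y"
        proof
          assume ty: "t \<in> ons_lab X \<omega> y"
          obtain n where n: "t = ssum X (OnsC x) n \<omega>" using tx lab(1) by auto
          obtain m where m: "t = ssum X (OnsC y) m \<omega>" using ty lab(1) by auto
          have "OnsC x \<in> SS" "OnsC y \<in> SS" using xa yb unfolding SS_def W_def by auto
          moreover have "range (OnsC x) \<inter> range (OnsC y) = {}" using ne by auto
          ultimately show False using coinc[of "OnsC x" "OnsC y" n m] n m by auto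
        qed
      next
        fix x y a b s assume xa: "(Vtx x, a) \<in> R" and yb: "(Vtx y, b) \<in> R"
          and sy: "s \<in> ons_lab X \<omega> y"
        show "s \<notin> Pset R x"
        proof
          assume sP: "s \<in> Pset R x"
          obtain n where n: "s = ssum X (OnsC y) n \<omega>" using sy lab(1) by auto
          have "(x, (y, (s, n))) \<in> I2" unfolding I2_def W_def using xa yb sP by auto
          then have "\<omega> \<in> N2" unfolding N2_def
            by (rule UN_I) (use n sp in simp)
          then show False using nN by auto
        qed
      next
        fix x y a b t assume xa: "(Vtx x, a) \<in> R" and yb: "(Vtx y, b) \<in> R" and e: "{x, y} \<in> E"
          and tt: "t \<in> tra_lab X \<omega> {x, y}"
        obtain n where n: "t = ssum X (TraC {x, y}) n \<omega>" using tt lab(3) by auto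
        have "x \<in> W" "y \<in> W" unfolding W_def using xa yb by auto
        then have "{x, y} \<in> EW" unfolding EW_def using e by blast
        then have sT: "TraC {x, y} \<in> SS" unfolding SS_def by blast
        have sR: "RecC x \<in> SS" "OnsC x \<in> SS" unfolding SS_def using \<open>x \<in> W\<close> by auto
        show "t \<notin> rec_lab X \<omega> x \<and> t \<notin> ons_lab X \<omega> x"
        proof (intro conjI notI)
          assume "t \<in> rec_lab X \<omega> x"
          then obtain m where m: "t = ssum X (RecC x) m \<omega>" using lab(2) by auto
          show False using coinc[OF sR(1) sT _, of m n] m n by auto
        next
          assume "t \<in> ons_lab X \<omega> x"
          then obtain m where m: "t = ssum X (OnsC x) m \<omega>" using lab(1) by auto
          show False using coinc[OF sR(2) sT _, of m n] m n by auto
        qed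
      qed
      show "(\<forall>t\<ge>0. \<forall>x\<in>V. \<forall>y\<in>V. (Vtx x, t) \<in> R \<and> (Vtx y, t) \<in> R \<and>
                 eta \<omega> x t = 2 \<and> eta \<omega> y t = 2 \<longrightarrow> x = y) \<and>
             (\<forall>xs ts. is_path E xs ts \<and>
                 potentially_active (rec_lab X \<omega>) (ons_lab X \<omega>) (tra_lab X \<omega>) xs ts \<and>
                 path_set xs ts \<subseteq> R \<and> eta \<omega> (hd xs) (ts ! 0) = 1 \<longrightarrow>
                 active_path (tra_lab X \<omega>) (eta \<omega>) xs ts)"
      proof (intro conjI allI impI ballI)
        fix t x y assume t: "0 \<le> t" and xy: "x \<in> V" "y \<in> V"
          and h: "(Vtx x, t) \<in> R \<and> (Vtx y, t) \<in> R \<and> eta \<omega> x t = 2 \<and> eta \<omega> y t = 2"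
        show "x = y" using core.claim1[OF C xy t] h by blast
      next
        fix xs ts assume h: "is_path E xs ts \<and>
                 potentially_active (rec_lab X \<omega>) (ons_lab X \<omega>) (tra_lab X \<omega>) xs ts \<and>
                 path_set xs ts \<subseteq> R \<and> eta \<omega> (hd xs) (ts ! 0) = 1"
        show "active_path (tra_lab X \<omega>) (eta \<omega>) xs ts" using core.claim2[OF C] h by blast
      qed
    qed
  qed
qed




lemma (in prob_space) exp_gt:
  assumes d: "distributed M lborel Z (exponential_density l)" and a: "0 \<le> a" and l: "0 < l"
  shows "prob (Z -` {a<..} \<inter> space M) = exp (- a * l)"
proof -
  have "Z -` {a<..} \<inter> space M = {\<omega> \<in> space M. a < Z \<omega>}" by auto
  then show ?thesis using exponential_distributedD_gt[OF d a l] by simp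
qed

lemma (in prob_space) exp_interval:
  assumes d: "distributed M lborel Z (exponential_density l)" and a: "0 \<le> a" "a \<le> b" and l: "0 < l"
  shows "prob (Z -` {a<..b} \<inter> space M) = exp (- a * l) - exp (- b * l)"
proof -
  have Zm: "Z \<in> measurable M lborel" using d by (simp add: distributed_def)
  have s1: "{\<omega> \<in> space M. a < Z \<omega>} \<in> events" using Zm by measurable
  have s2: "{\<omega> \<in> space M. b < Z \<omega>} \<in> events" using Zm by measurable
  have eq: "Z -` {a<..b} \<inter> space M = {\<omega> \<in> space M. a < Z \<omega>} - {\<omega> \<in> space M. b < Z \<omega>}" by auto
  have "prob (Z -` {a<..b} \<inter> space M) = prob {\<omega> \<in> space M. a < Z \<omega>} - prob {\<omega> \<in> space M. b < Z \<omega>}"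
    unfolding eq by (rule finite_measure_Diff[OF s1 s2]) (use a in auto)
  also have "\<dots> = exp (- a * l) - exp (- b * l)"
    using exponential_distributedD_gt[OF d a(1) l] exponential_distributedD_gt[OF d _ l, of b] a by simp
  finally show ?thesis .
qed

definition Ev :: "('v clock \<Rightarrow> 'a \<Rightarrow> real) \<Rightarrow> 'v \<Rightarrow> real \<Rightarrow> real \<Rightarrow> real \<Rightarrow> 'a \<Rightarrow> bool" where
  "Ev X x p \<delta> q \<omega> \<longleftrightarrow> p < X (OnsC x 0) \<omega> \<and> X (OnsC x 0) \<omega> \<le> p + \<delta> \<and> 0 < X (OnsC x (Suc 0)) \<omega> \<and>
     X (OnsC x (Suc 0)) \<omega> \<le> \<delta> \<and> q < X (RecC x 0) \<omega>"

definition Aset :: "'v \<Rightarrow> real \<Rightarrow> real \<Rightarrow> real \<Rightarrow> 'v clock \<Rightarrow> real set" where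
  "Aset x p \<delta> q i = (if i = OnsC x 0 then {p<..p+\<delta>} else if i = OnsC x (Suc 0) then {0<..\<delta>} else {q<..})"

definition Kset :: "'v \<Rightarrow> 'v clock set" where
  "Kset x = {OnsC x 0, OnsC x (Suc 0), RecC x 0}"

lemma (in prob_space) prob_Ev:
  fixes X :: "'v clock \<Rightarrow> 'a \<Rightarrow> real"
  assumes ind: "indep_vars (\<lambda>_. borel) X I" and K: "Kset x \<subseteq> I"
    and d0: "distributed M lborel (X (OnsC x 0)) (exponential_density 1)"
    and d1: "distributed M lborel (X (OnsC x (Suc 0))) (exponential_density 1)"
    and d2: "distributed M lborel (X (RecC x 0)) (exponential_density tau)"
    and tau: "0 < tau" and p: "0 \<le> p" and \<delta>: "0 < \<delta>" and q: "0 \<le> q"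
  shows "prob {\<omega> \<in> space M. Ev X x p \<delta> q \<omega>} =
           (exp (- p * 1) - exp (- (p + \<delta>) * 1)) * (exp (- 0 * 1) - exp (- \<delta> * 1)) * exp (- q * tau)"
proof -
  have eq: "{\<omega> \<in> space M. Ev X x p \<delta> q \<omega>} = (\<Inter>i\<in>Kset x. X i -` Aset x p \<delta> q i \<inter> space M)"
    unfolding Ev_def Aset_def Kset_def by auto
  have "prob (\<Inter>i\<in>Kset x. X i -` Aset x p \<delta> q i \<inter> space M) = (\<Prod>i\<in>Kset x. prob (X i -` Aset x p \<delta> q i \<inter> space M))"
    by (rule indep_varsD[OF ind]) (use K in \<open>auto simp: Kset_def Aset_def\<close>)
  also have "\<dots> = prob (X (OnsC x 0) -` {p<..p+\<delta>} \<inter> space M) * (prob (X (OnsC x (Suc 0)) -` {0<..\<delta>} \<inter> space M) *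
                   prob (X (RecC x 0) -` {q<..} \<inter> space M))"
    unfolding Kset_def by (simp add: Aset_def)
  also have "\<dots> = (exp (- p * 1) - exp (- (p + \<delta>) * 1)) * ((exp (- 0 * 1) - exp (- \<delta> * 1)) * exp (- q * tau))"
    using exp_interval[OF d0 p, of "p + \<delta>"] exp_interval[OF d1, of 0 \<delta>] exp_gt[OF d2 q tau] \<delta> by simp
  finally show ?thesis unfolding eq by (simp add: mult.assoc)
qed




lemma (in prob_space) Z_null:
  fixes X :: "'v clock \<Rightarrow> 'a \<Rightarrow> real" and xs :: "nat \<Rightarrow> 'v"
  assumes ind: "indep_vars (\<lambda>_. borel) X I" and xs: "inj xs" and K: "\<And>k. Kset (xs k) \<subseteq> I"
    and d0: "\<And>k. distributed M lborel (X (OnsC (xs k) 0)) (exponential_density 1)"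
    and d1: "\<And>k. distributed M lborel (X (OnsC (xs k) (Suc 0))) (exponential_density 1)"
    and d2: "\<And>k. distributed M lborel (X (RecC (xs k) 0)) (exponential_density tau)"
    and tau: "0 < tau" and p: "0 \<le> p" and \<delta>: "0 < \<delta>" and q: "0 \<le> q"
  shows "(\<Inter>k. {\<omega> \<in> space M. \<not> Ev X (xs k) p \<delta> q \<omega>}) \<in> null_sets M"
proof -
  define \<pi> where "\<pi> = (exp (- p * 1) - exp (- (p + \<delta>) * 1)) * (exp (- 0 * 1) - exp (- \<delta> * 1)) * exp (- q * tau)"
  have Pk: "prob {\<omega> \<in> space M. Ev X (xs k) p \<delta> q \<omega>} = \<pi>" for k
    unfolding \<pi>_def by (rule prob_Ev[OF ind K d0 d1 d2 tau p \<delta> q])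
  have pipos: "0 < \<pi>" unfolding \<pi>_def using \<delta> by (intro mult_pos_pos) auto
  have pile: "\<pi> \<le> 1" using Pk[of 0] by (metis prob_le_1)
  have Xm: "\<And>i. i \<in> I \<Longrightarrow> X i \<in> borel_measurable M" using ind unfolding indep_vars_def by auto
  have K3: "OnsC (xs k) 0 \<in> I" "OnsC (xs k) (Suc 0) \<in> I" "RecC (xs k) 0 \<in> I" for k
    using K[of k] unfolding Kset_def by auto
  have Evm: "{\<omega> \<in> space M. Ev X (xs k) p \<delta> q \<omega>} \<in> events" for k
    unfolding Ev_def using Xm[OF K3(1)] Xm[OF K3(2)] Xm[OF K3(3)] by measurable
  define Y where "Y k \<omega> = restrict (\<lambda>i. X i \<omega>) (Kset (xs k))" for k \<omega>
  have dj: "disjoint_family_on (\<lambda>k. Kset (xs k)) UNIV"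
    unfolding disjoint_family_on_def Kset_def using xs by (auto dest: injD)
  have indY: "indep_vars (\<lambda>k. PiM (Kset (xs k)) (\<lambda>_. borel)) Y UNIV"
    unfolding Y_def using K by (intro indep_vars_restrict[OF ind _ dj]) auto
  define B where "B k = {v \<in> space (PiM (Kset (xs k)) (\<lambda>_. borel :: real measure)).
      \<not> (p < v (OnsC (xs k) 0) \<and> v (OnsC (xs k) 0) \<le> p + \<delta> \<and> 0 < v (OnsC (xs k) (Suc 0)) \<and>
         v (OnsC (xs k) (Suc 0)) \<le> \<delta> \<and> q < v (RecC (xs k) 0))}" for k
  have Bm: "B k \<in> sets (PiM (Kset (xs k)) (\<lambda>_. borel))" for k
  proof -
    have c: "OnsC (xs k) 0 \<in> Kset (xs k)" "OnsC (xs k) (Suc 0) \<in> Kset (xs k)" "RecC (xs k) 0 \<in> Kset (xs k)"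
      unfolding Kset_def by auto
    have m1: "(\<lambda>v. v (OnsC (xs k) 0)) \<in> borel_measurable (PiM (Kset (xs k)) (\<lambda>_. borel :: real measure))"
      by (rule measurable_component_singleton[OF c(1)])
    have m2: "(\<lambda>v. v (OnsC (xs k) (Suc 0))) \<in> borel_measurable (PiM (Kset (xs k)) (\<lambda>_. borel :: real measure))"
      by (rule measurable_component_singleton[OF c(2)])
    have m3: "(\<lambda>v. v (RecC (xs k) 0)) \<in> borel_measurable (PiM (Kset (xs k)) (\<lambda>_. borel :: real measure))"
      by (rule measurable_component_singleton[OF c(3)])
    show ?thesis unfolding B_def using m1 m2 m3 by measurable
  qed
  have YB: "Y k -` B k \<inter> space M = space M - {\<omega> \<in> space M. Ev X (xs k) p \<delta> q \<omega>}" for k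
  proof -
    have "Y k \<omega> \<in> space (PiM (Kset (xs k)) (\<lambda>_. borel :: real measure))" for \<omega>
      unfolding Y_def by (simp add: space_PiM)
    then show ?thesis unfolding B_def Y_def Ev_def Kset_def by auto
  qed
  define Zs where "Zs = (\<Inter>k. {\<omega> \<in> space M. \<not> Ev X (xs k) p \<delta> q \<omega>})"
  have Zeq: "Zs = (\<Inter>k. space M - {\<omega> \<in> space M. Ev X (xs k) p \<delta> q \<omega>})" unfolding Zs_def by auto
  have Zm: "Zs \<in> events" unfolding Zeq using Evm by auto
  have bound: "prob Zs \<le> (1 - \<pi>) ^ Suc n" for n
  proof -
    have "prob (\<Inter>k\<in>{..<Suc n}. Y k -` B k \<inter> space M) = (\<Prod>k\<in>{..<Suc n}. prob (Y k -` B k \<inter> space M))"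
      by (rule indep_varsD[OF indY]) (use Bm in auto)
    also have "\<dots> = (\<Prod>k\<in>{..<Suc n}. 1 - \<pi>)"
      by (intro prod.cong refl) (simp add: YB prob_compl[OF Evm] Pk)
    also have "\<dots> = (1 - \<pi>) ^ Suc n" by simp
    finally have eq: "prob (\<Inter>k\<in>{..<Suc n}. Y k -` B k \<inter> space M) = (1 - \<pi>) ^ Suc n" .
    have "Zs \<subseteq> (\<Inter>k\<in>{..<Suc n}. Y k -` B k \<inter> space M)" unfolding Zeq YB by auto
    moreover have "(\<Inter>k\<in>{..<Suc n}. Y k -` B k \<inter> space M) \<in> events"
      unfolding YB using Evm by auto
    ultimately have "prob Zs \<le> prob (\<Inter>k\<in>{..<Suc n}. Y k -` B k \<inter> space M)"
      by (rule finite_measure_mono)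
    then show ?thesis using eq by simp
  qed
  have lim: "(\<lambda>n. (1 - \<pi>) ^ Suc n) \<longlonglongrightarrow> 0"
  proof -
    have "(\<lambda>n. (1 - \<pi>) ^ n) \<longlonglongrightarrow> 0" using pipos pile by (intro LIMSEQ_power_zero) auto
    then show ?thesis by (rule LIMSEQ_Suc)
  qed
  have "prob Zs \<le> 0" using lim bound by (intro LIMSEQ_le_const[OF lim]) auto
  then have "prob Zs = 0" using measure_nonneg[of M Zs] by linarith
  then show ?thesis using Zm unfolding Zs_def[symmetric] by (simp add: null_sets_def emeasure_eq_measure)
qed




lemma oo_Ev:
  assumes oo: "onset_ordered (rec_lab X \<omega>) (ons_lab X \<omega>) R" and ev: "Ev X x p \<delta> q \<omega>"
    and nn: "\<forall>j. 0 \<le> X (RecC x j) \<omega>" and reg: "\<forall>r. p < r \<and> r < q \<longrightarrow> (Vtx x, r) \<in> R"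
    and pq: "p + 2 * \<delta> < q"
  shows False
proof -
  define T0 where "T0 = X (OnsC x 0) \<omega>"
  define T1 where "T1 = X (OnsC x 0) \<omega> + X (OnsC x (Suc 0)) \<omega>"
  have T0on: "T0 \<in> ons_lab X \<omega> x" unfolding ons_lab_def arrivals_def T0_def
    by (rule range_eqI[of _ _ 0]) simp
  have T1on: "T1 \<in> ons_lab X \<omega> x" unfolding ons_lab_def arrivals_def T1_def
    by (rule range_eqI[of _ _ "Suc 0"]) (simp add: atMost_Suc)
  have b: "p < T0" "T0 < T1" "T1 < q" using ev pq unfolding Ev_def T0_def T1_def by auto
  have "{Vtx x} \<times> {T0<..<q} \<subseteq> R" using reg b by auto
  moreover have "(Vtx x, T0) \<in> R" "(Vtx x, T1) \<in> R" using reg b by auto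
  ultimately have "\<exists>s'. T0 < s' \<and> s' < T1 \<and> s' \<in> rec_lab X \<omega> x"
    using oo[unfolded onset_ordered_def, rule_format, of T0 x q T1 x] T0on T1on b by auto
  then obtain s' where s': "s' < T1" "s' \<in> rec_lab X \<omega> x" by blast
  then obtain n where n: "s' = (\<Sum>k\<le>n. X (RecC x k) \<omega>)" unfolding rec_lab_def arrivals_def by auto
  have "X (RecC x 0) \<omega> \<le> (\<Sum>k\<le>n. X (RecC x k) \<omega>)"
    by (rule member_le_sum[of 0 "{..n}" "\<lambda>k. X (RecC x k) \<omega>", simplified]) (use nn in auto)
  moreover have "q < X (RecC x 0) \<omega>" using ev unfolding Ev_def by auto
  ultimately show False using n s' b by auto
qed

lemma uncountable_case:
  fixes M :: "'w measure" and V :: "'v set" and E :: "'v set set"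
    and lam tau :: real and X :: "'v clock \<Rightarrow> 'w \<Rightarrow> real" and R :: "('v loc \<times> real) set"
  assumes PS: "prob_space M"
    and GR: "graphical_rep M V E lam tau X" and tau: "tau > 0"
    and clo: "closure_of_open V E R"
    and ncW: "\<not> countable {x. \<exists>t. (Vtx x, t) \<in> R}"
  shows "AE \<omega> in M. \<not> onset_ordered (rec_lab X \<omega>) (ons_lab X \<omega>) R"
proof -
  interpret prob_space M by (rule PS)
  define W where "W = {x. \<exists>t. (Vtx x, t) \<in> R}"
  have WV: "W \<subseteq> V" using R_sub(1)[OF clo] unfolding W_def locs_def by auto
  have ind: "indep_vars (\<lambda>_. borel) X (clock_index V E)" using GR unfolding graphical_rep_def by blast
  have dR: "\<And>x n. x \<in> V \<Longrightarrow> distributed M lborel (X (RecC x n)) (exponential_density tau)"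
    and dO: "\<And>x n. x \<in> V \<Longrightarrow> distributed M lborel (X (OnsC x n)) (exponential_density 1)"
    using GR unfolding graphical_rep_def by blast+
  define Pr where "Pr x pq \<longleftrightarrow> fst pq \<in> \<rat> \<and> snd pq \<in> \<rat> \<and> 0 \<le> fst pq \<and> fst pq < snd pq \<and>
      (\<forall>r. fst pq < r \<and> r < snd pq \<longrightarrow> (Vtx x, r) \<in> R)" for x pq
  define F where "F x = (SOME pq. Pr x pq)" for x
  have F: "Pr x (F x)" if xW: "x \<in> W" for x
  proof -
    obtain t where "(Vtx x, t) \<in> R" using xW unfolding W_def by blast
    then obtain p q where "p \<in> \<rat> \<and> q \<in> \<rat> \<and> 0 \<le> p \<and> p < q \<and> (\<forall>r. p < r \<and> r < q \<longrightarrow> (Vtx x, r) \<in> R)"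
      using R_interior[OF clo] by blast
    then have "Pr x (p, q)" unfolding Pr_def by simp
    then show ?thesis unfolding F_def by (rule someI)
  qed
  have "\<exists>pq. infinite {x \<in> W. F x = pq}"
  proof (rule ccontr)
    assume "\<nexists>pq. infinite {x \<in> W. F x = pq}"
    then have fin: "\<And>pq. finite {x \<in> W. F x = pq}" by blast
    have "W = (\<Union>pq\<in>F ` W. {x \<in> W. F x = pq})" by auto
    moreover have "countable (F ` W)"
    proof (rule countable_subset[of _ "\<rat> \<times> \<rat>"])
      show "F ` W \<subseteq> \<rat> \<times> \<rat>"
      proof
        fix z assume "z \<in> F ` W"
        then obtain x where "x \<in> W" "z = F x" by blast
        then have "Pr x z" using F by simp
        then show "z \<in> \<rat> \<times> \<rat>" unfolding Pr_def by (cases z) auto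
      qed
      show "countable (\<rat> \<times> \<rat>)" by (intro countable_SIGMA countable_rat)
    qed
    moreover have "countable (\<Union>pq\<in>F ` W. {x \<in> W. F x = pq})"
      using \<open>countable (F ` W)\<close> by (rule countable_UN) (rule countable_finite[OF fin])
    ultimately have "countable W" by simp
    then show False using ncW unfolding W_def by simp
  qed
  then obtain pq where inf: "infinite {x \<in> W. F x = pq}" by blast
  obtain xs :: "nat \<Rightarrow> 'v" where xs: "inj xs" "range xs \<subseteq> {x \<in> W. F x = pq}"
    using infinite_countable_subset[OF inf] by blast
  define p where "p = fst pq"
  define q where "q = snd pq"
  have xk: "xs k \<in> W" "Pr (xs k) pq" for k
  proof -
    show "xs k \<in> W" using xs(2) by auto
    have "F (xs k) = pq" using xs(2) by auto
    then show "Pr (xs k) pq" using F[OF \<open>xs k \<in> W\<close>] by simp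
  qed
  then have pq: "0 \<le> p" "p < q" and reg: "\<forall>r. p < r \<and> r < q \<longrightarrow> (Vtx (xs k), r) \<in> R" for k
    unfolding Pr_def p_def q_def by auto
  define \<delta> where "\<delta> = (q - p) / 3"
  have \<delta>: "0 < \<delta>" "p + 2 * \<delta> < q" using pq unfolding \<delta>_def by (simp_all add: field_simps)
  have xV: "xs k \<in> V" for k using xk WV by auto
  have K: "Kset (xs k) \<subseteq> clock_index V E" for k using xV[of k] unfolding Kset_def clock_index_def by auto
  have Zn: "(\<Inter>k. {\<omega> \<in> space M. \<not> Ev X (xs k) p \<delta> q \<omega>}) \<in> null_sets M"
    by (rule Z_null[OF ind xs(1) K dO dO dR tau pq(1) \<delta>(1)]) (use pq xV in auto)
  define NN where "NN = (\<Union>kj\<in>(UNIV :: (nat \<times> nat) set). {\<omega> \<in> space M. X (RecC (xs (fst kj)) (snd kj)) \<omega> < 0})"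
  have NNn: "NN \<in> null_sets M" unfolding NN_def
    by (rule null_sets_UN') (auto intro!: exp_neg_null dR xV)
  show ?thesis
  proof (rule AE_I'[of "(\<Inter>k. {\<omega> \<in> space M. \<not> Ev X (xs k) p \<delta> q \<omega>}) \<union> NN"])
    show "(\<Inter>k. {\<omega> \<in> space M. \<not> Ev X (xs k) p \<delta> q \<omega>}) \<union> NN \<in> null_sets M" using Zn NNn by auto
    show "{\<omega> \<in> space M. \<not> \<not> onset_ordered (rec_lab X \<omega>) (ons_lab X \<omega>) R} \<subseteq>
          (\<Inter>k. {\<omega> \<in> space M. \<not> Ev X (xs k) p \<delta> q \<omega>}) \<union> NN"
    proof
      fix \<omega> assume "\<omega> \<in> {\<omega> \<in> space M. \<not> \<not> onset_ordered (rec_lab X \<omega>) (ons_lab X \<omega>) R}"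
      then have sp: "\<omega> \<in> space M" and oo: "onset_ordered (rec_lab X \<omega>) (ons_lab X \<omega>) R" by auto
      show "\<omega> \<in> (\<Inter>k. {\<omega> \<in> space M. \<not> Ev X (xs k) p \<delta> q \<omega>}) \<union> NN"
      proof (cases "\<omega> \<in> NN")
        case False
        then have nn: "\<forall>j. 0 \<le> X (RecC (xs k) j) \<omega>" for k
          unfolding NN_def using sp by (auto simp: not_less)
        have "\<not> Ev X (xs k) p \<delta> q \<omega>" for k
          using oo_Ev[OF oo _ nn reg \<delta>(2)] by blast
        then show ?thesis using sp by auto
      qed simp
    qed
  qed
qed


theorem lemma4:
  fixes M :: "'w measure" and V :: "'v set" and E :: "'v set set"
    and lam tau :: real and X :: "'v clock \<Rightarrow> 'w \<Rightarrow> real"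
    and eta :: "'w \<Rightarrow> 'v \<Rightarrow> real \<Rightarrow> nat" and R :: "('v loc \<times> real) set"
  assumes "prob_space M"
    and "graph V E" and "bounded_degree V E"
    and "lam > 0" and "tau > 0"
    and "graphical_rep M V E lam tau X"
    and "AE \<omega> in M. seis_traj V E (rec_lab X \<omega>) (ons_lab X \<omega>) (tra_lab X \<omega>) (eta \<omega>)"
    and "closure_of_open V E R"
  shows "AE \<omega> in M.
           onset_ordered (rec_lab X \<omega>) (ons_lab X \<omega>) R \<and> good_for (eta \<omega>) R \<longrightarrow>
             (\<forall>t\<ge>0. \<forall>x\<in>V. \<forall>y\<in>V. (Vtx x, t) \<in> R \<and> (Vtx y, t) \<in> R \<and>
                 eta \<omega> x t = 2 \<and> eta \<omega> y t = 2 \<longrightarrow> x = y) \<and>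
             (\<forall>xs ts. is_path E xs ts \<and>
                 potentially_active (rec_lab X \<omega>) (ons_lab X \<omega>) (tra_lab X \<omega>) xs ts \<and>
                 path_set xs ts \<subseteq> R \<and> eta \<omega> (hd xs) (ts ! 0) = 1 \<longrightarrow>
                 active_path (tra_lab X \<omega>) (eta \<omega>) xs ts)"
  proof (cases "countable {x. \<exists>t. (Vtx x, t) \<in> R}")
  case True
  show ?thesis by (rule countable_case[OF assms(1) assms(2) assms(6) assms(7) assms(8) True])
next
  case False
  have "AE \<omega> in M. \<not> onset_ordered (rec_lab X \<omega>) (ons_lab X \<omega>) R"
    by (rule uncountable_case[OF assms(1) assms(6) assms(5) assms(8) False])
  then show ?thesis by eventually_elim simp
qed

end
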